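(* Let $f\in R(A_2)$, $g\in R(A_1^* )$, $k\in K_2$, let $x\in D_2=D(A_2)\cap D(A_1^* )$ be the unique solution of $A_2x=f$, $A_1^*x=g$, $\pi_2x=k$, and let $\tilde x:=k+\tilde x_\perp$ with some $\tilde x_\perp\in K_2^{\perp}$ (orthogonal complement in $H_2$). Let $e:=x-\tilde x$, $e_{A_1}:=\pi_{A_1}e$, $e_{A_2^*}:=\pi_{A_2^*}e$. Then: (i) $e=x_f+x_g-\tilde x_\perp=e_{A_1}+e_{A_2^*}\in R(A_1)\oplus R(A_2^* )=K_2^\perp$, $\pi_2e=0$, and $\|e\|^2_{H_2}=\|e_{A_1}\|^2_{H_2}+\|e_{A_2^*}\|^2_{H_2}$; (ii) $e_{A_1}=x_g-\pi_{A_1}\tilde x=x_g-\pi_{A_1}\tilde x_\perp$ satisfies $$\|e_{A_1}\|_{H_2}=\min_{\zeta\in D(A_1^* )}\big(c_1\|A_1^*\zeta-g\|_{H_1}+\|\zeta-\tilde x\|_{H_2}\big)=\min_{\zeta\in D(A_1^* )}\big(c_1\|A_1^*\zeta-g\|_{H_1}+\|\zeta-\tilde x_\perp\|_{H_2}\big),$$ the minima being attained at $\hat\zeta:=e_{A_1}+\tilde x=x-\pi_{N(A_1^* )}e$ and $\hat\zeta_\perp:=e_{A_1}+\tilde x_\perp=x-k-\pi_{N(A_1^* )}e$, both in $D(A_1^* )$ with $A_1^*\hat\zeta=A_1^*\hat\zeta_\perp=g$; (iii) $e_{A_2^*}=x_f-\pi_{A_2^*}\tilde x=x_f-\pi_{A_2^*}\tilde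 x_\perp$ satisfies $$\|e_{A_2^*}\|_{H_2}=\min_{\xi\in D(A_2)}\big(c_2\|A_2\xi-f\|_{H_3}+\|\xi-\tilde x\|_{H_2}\big)=\min_{\xi\in D(A_2)}\big(c_2\|A_2\xi-f\|_{H_3}+\|\xi-\tilde x_\perp\|_{H_2}\big),$$ the minima being attained at $\hat\xi:=e_{A_2^*}+\tilde x=x-\pi_{N(A_2)}e$ and $\hat\xi_\perp:=e_{A_2^*}+\tilde x_\perp=x-k-\pi_{N(A_2)}e$, both in $D(A_2)$ with $A_2\hat\xi=A_2\hat\xi_\perp=f$.
   Context: Let $H_0,\dots,H_4$ be Hilbert spaces and, for $\ell=0,\dots,3$, $A_\ell:D(A_\ell)\subset H_\ell\to H_{\ell+1}$ densely defined closed linear operators with Hilbert space adjoints $A_\ell^*$, satisfying $R(A_\ell)\subset N(A_{\ell+1})$ for $\ell=0,1,2$. Standing assumption: $R(A_1)$ and $R(A_2)$ are closed and $K_2$ is finite dimensional. $K_2:=N(A_2)\cap N(A_1^* )$, $\pi_2:H_2\to K_2$ orthogonal projector; $\pi_{A_1}$, $\pi_{A_2^*}$ orthogonal projectors of $H_2$ onto $R(A_1)$, $R(A_2^* )$; $\pi_{N(A_1^* )}:=1-\pi_{A_1}$, $\pi_{N(A_2)}:=1-\pi_{A_2^*}$. $x_f:=(A_2|_{D(A_2)\cap R(A_2^* )})^{-1}f$, $x_g:=(A_1^*|_{D(A_1^* )\cap R(A_1)})^{-1}g$. $c_\ell\in(0,\infty)$ is the best constant with $\|x\|_{H_\ell}\le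 c_\ell\|A_\ell x\|_{H_{\ell+1}}$ for $x\in D(A_\ell)\cap R(A_\ell^* )$. *)

theory Defs
  imports "HOL-Analysis.Analysis"
begin

text \<open>Unbounded linear operators between real Hilbert spaces are represented by a
  domain D and a function A (only its values on D matter).\<close>

definition linear_on :: "'a::real_vector set \<Rightarrow> ('a \<Rightarrow> 'b::real_vector) \<Rightarrow> bool" where
  "linear_on D A \<longleftrightarrow> subspace D \<and>
     (\<forall>x\<in>D. \<forall>y\<in>D. A (x + y) = A x + A y) \<and> (\<forall>c. \<forall>x\<in>D. A (c *\<^sub>R x) = c *\<^sub>R A x)"

definition dd_closed_op :: "'a::real_normed_vector set \<Rightarrow> ('a \<Rightarrow> 'b::real_normed_vector) \<Rightarrow> bool" where
  "dd_closed_op D A \<longleftrightarrow> linear_on D A \<and> closure D = UNIV \<and> closed {(x, A x) | x. x \<in> D}"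

definition adj_dom :: "'a::real_inner set \<Rightarrow> ('a \<Rightarrow> 'b::real_inner) \<Rightarrow> 'b set" where
  "adj_dom D A = {y. \<exists>z. \<forall>x\<in>D. inner (A x) y = inner x z}"

definition adj :: "'a::real_inner set \<Rightarrow> ('a \<Rightarrow> 'b::real_inner) \<Rightarrow> 'b \<Rightarrow> 'a" where
  "adj D A y = (THE z. \<forall>x\<in>D. inner (A x) y = inner x z)"

definition ran_op :: "'a set \<Rightarrow> ('a \<Rightarrow> 'b) \<Rightarrow> 'b set" where
  "ran_op D A = A ` D"

definition ker_op :: "'a set \<Rightarrow> ('a \<Rightarrow> 'b::zero) \<Rightarrow> 'a set" where
  "ker_op D A = {x \<in> D. A x = 0}"

definition oproj :: "'a::real_inner set \<Rightarrow> 'a \<Rightarrow> 'a" where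
  "oproj S x = (THE p. p \<in> S \<and> (\<forall>s\<in>S. inner (x - p) s = 0))"

definition fp_const :: "'a::real_inner set \<Rightarrow> ('a \<Rightarrow> 'b::real_inner) \<Rightarrow> real" where
  "fp_const D A = Inf {c. 0 < c \<and>
     (\<forall>x \<in> D \<inter> ran_op (adj_dom D A) (adj D A). norm x \<le> c * norm (A x))}"

end

theory Submission
  imports Defs
begin


lemma closed_orth_set: "closed {x::'a::real_inner. \<forall>a\<in>S. inner a x = 0}"
proof -
  have "{x::'a. \<forall>a\<in>S. inner a x = 0} = (\<Inter>a\<in>S. {x. inner a x = 0})" by auto
  moreover have "closed {x::'a. inner a x = 0}" for a
    by (intro closed_Collect_eq continuous_intros)
  ultimately show ?thesis by auto
qed

lemma proj_exists:
  fixes S :: "'a::{real_inner,complete_space} set"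
  assumes sub: "subspace S" and cl: "closed S"
  shows "\<exists>p\<in>S. \<forall>s\<in>S. inner (x - p) s = 0"
proof -
  define d where "d = Inf ((\<lambda>s. norm (x - s)) ` S)"
  have S0: "0 \<in> S" using sub by (simp add: subspace_0)
  have bdd: "bdd_below ((\<lambda>s. norm (x - s)) ` S)" by (rule bdd_belowI[of _ 0]) auto
  have dle: "d \<le> norm (x - s)" if "s \<in> S" for s
    unfolding d_def using bdd that by (auto intro: cInf_lower)
  have d0: "d \<ge> 0" unfolding d_def using S0 by (auto intro: cInf_greatest)
  have "\<exists>s\<in>S. norm (x - s)^2 < d^2 + 1 / real (Suc n)" for n
  proof -
    have pos: "0 < 1 / real (Suc n)" by simp
    have "d < sqrt (d^2 + 1 / real (Suc n))"
    proof -
      have "sqrt (d^2) < sqrt (d^2 + 1 / real (Suc n))" using pos by (subst real_sqrt_less_iff) simp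
      thus ?thesis using d0 by simp
    qed
    hence "Inf ((\<lambda>s. norm (x - s)) ` S) < sqrt (d^2 + 1 / real (Suc n))" unfolding d_def .
    from cInf_lessD[OF _ this] obtain s where "s \<in> S" "norm (x - s) < sqrt (d^2 + 1 / real (Suc n))"
      using S0 by blast
    moreover have "norm (x - s)^2 < d^2 + 1 / real (Suc n)"
    proof -
      have "norm (x - s)^2 < (sqrt (d^2 + 1 / real (Suc n)))^2"
        using calculation(2) by (intro power_strict_mono) auto
      also have "\<dots> = d^2 + 1 / real (Suc n)" using pos by (intro real_sqrt_pow2) (simp add: add_nonneg_nonneg)
      finally show ?thesis .
    qed
    ultimately show ?thesis by blast
  qed
  hence "\<forall>n. \<exists>s. s \<in> S \<and> norm (x - s)^2 < d^2 + 1 / real (Suc n)" by blast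
  from choice[OF this] obtain s where s: "\<forall>n. s n \<in> S \<and> norm (x - s n)^2 < d^2 + 1 / real (Suc n)"
    by blast
  hence sS: "\<And>n. s n \<in> S" and sd: "\<And>n. norm (x - s n)^2 < d^2 + 1 / real (Suc n)" by auto
  have para: "norm (s m - s n)^2 \<le> 2 / real (Suc m) + 2 / real (Suc n)" for m n
  proof -
    let ?a = "x - s m" and ?b = "x - s n"
    have pl: "norm (?a - ?b)^2 + norm (?a + ?b)^2 = 2 * norm ?a^2 + 2 * norm ?b^2"
      unfolding power2_norm_eq_inner by (simp add: inner_diff_left inner_diff_right inner_add_left inner_add_right algebra_simps)
    have mid: "(1/2) *\<^sub>R (s m + s n) \<in> S"
      using sub sS by (simp add: subspace_add subspace_scale)
    have "?a + ?b = 2 *\<^sub>R (x - (1/2) *\<^sub>R (s m + s n))" by (simp add: algebra_simps scaleR_2)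
    hence "norm (?a + ?b) = 2 * norm (x - (1/2) *\<^sub>R (s m + s n))" by simp
    hence "norm (?a + ?b) \<ge> 2 * d" using dle[OF mid] by simp
    hence "(2*d)^2 \<le> norm (?a + ?b)^2" using d0 by (intro power_mono) auto
    moreover have "norm (?a - ?b)^2 = norm (s m - s n)^2"
    proof -
      have "?a - ?b = - (s m - s n)" by simp
      thus ?thesis by (simp only: norm_minus_cancel)
    qed
    moreover have "(2*d)^2 = 4 * d^2" by (simp add: power_mult_distrib)
    moreover have "2 / real (Suc m) = 2 * (1 / real (Suc m))" "2 / real (Suc n) = 2 * (1 / real (Suc n))" by simp_all
    ultimately show ?thesis using pl sd[of m] sd[of n] by linarith
  qed
  have "Cauchy s"
  proof (rule CauchyI)
    fix e :: real assume e: "e > 0"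
    obtain N where N: "4 / e^2 < real N" using reals_Archimedean2 by blast
    show "\<exists>M. \<forall>m\<ge>M. \<forall>n\<ge>M. norm (s m - s n) < e"
    proof (rule exI[of _ N], intro allI impI)
      fix m n assume mn: "N \<le> m" "N \<le> n"
      have "2 / real (Suc m) \<le> 2 / real (Suc N)"
        by (rule frac_le) (use mn in auto)
      moreover have "2 / real (Suc n) \<le> 2 / real (Suc N)"
        by (rule frac_le) (use mn in auto)
      moreover have "4 / real (Suc N) = 2 / real (Suc N) + 2 / real (Suc N)" by (simp add: add_divide_distrib[symmetric])
      ultimately have "norm (s m - s n)^2 \<le> 4 / real (Suc N)" using para[of m n] by linarith
      also have "\<dots> < e^2"
      proof -
        have "4 / e^2 < real (Suc N)" using N by simp
        thus ?thesis using e by (simp add: field_simps)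
      qed
      finally show "norm (s m - s n) < e" by (rule power2_less_imp_less[OF _ less_imp_le[OF e]])
    qed
  qed
  then obtain p where sp: "s \<longlonglongrightarrow> p" using Cauchy_convergent_iff convergent_def by blast
  have pS: "p \<in> S" using cl sS sp closed_sequentially by blast
  have "(\<lambda>n. norm (x - s n)^2) \<longlonglongrightarrow> norm (x - p)^2"
    by (intro tendsto_power tendsto_norm tendsto_diff tendsto_const sp)
  moreover have "(\<lambda>n. d^2 + 1 / real (Suc n)) \<longlonglongrightarrow> d^2 + 0"
    by (rule tendsto_add[OF tendsto_const LIMSEQ_inverse_real_of_nat[unfolded inverse_eq_divide]])
  ultimately have "norm (x - p)^2 \<le> d^2 + 0"
    by (rule LIMSEQ_le) (use sd less_imp_le in blast)
  hence pd: "norm (x - p)^2 \<le> d^2" by simp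
  have minp: "norm (x - p)^2 \<le> norm (x - q)^2" if "q \<in> S" for q
    using pd power_mono[OF dle[OF that] d0, of 2] by linarith
  have "inner (x - p) t = 0" if tS: "t \<in> S" for t
  proof (cases "t = 0")
    case True thus ?thesis by simp
  next
    case False
    define a where "a = inner (x - p) t"
    define b where "b = inner t t"
    have b0: "b > 0" using False unfolding b_def by simp
    have "p + (a / b) *\<^sub>R t \<in> S" using sub pS tS by (simp add: subspace_add subspace_scale)
    from minp[OF this] have m1: "norm (x - p)^2 \<le> norm (x - (p + (a/b) *\<^sub>R t))^2" .
    have eq: "x - (p + (a/b) *\<^sub>R t) = (x - p) - (a/b) *\<^sub>R t" by simp
    from m1 have "norm (x - p)^2 \<le> norm ((x - p) - (a/b) *\<^sub>R t)^2" by (simp only: eq)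
    also have "\<dots> = norm (x-p)^2 - 2 * (a/b) * a + (a/b)^2 * b"
    proof -
      have gen: "inner (w - c *\<^sub>R u) (w - c *\<^sub>R u) = inner w w - 2 * c * inner w u + c^2 * inner u u"
        for w u :: 'a and c :: real
      proof -
        have e: "inner u w = inner w u" by (rule inner_commute)
        have "inner (w - c *\<^sub>R u) (w - c *\<^sub>R u) = inner w w - c * inner w u - c * inner u w + c * c * inner u u"
          by (simp add: inner_diff_left inner_diff_right algebra_simps)
        thus ?thesis unfolding e by (simp add: power2_eq_square)
      qed
      show ?thesis unfolding power2_norm_eq_inner gen a_def b_def ..
    qed
    finally have h0: "0 \<le> (- 2) * (a/b) * a + (a/b)^2 * b" by simp
    have "(- 2) * (a/b) * a + (a/b)^2 * b = (- (a^2)) / b" using b0 by (simp add: field_simps power2_eq_square)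
    with h0 have "0 \<le> (- (a^2)) / b" by simp
    hence h1: "a^2 / b \<le> 0" by simp
    have "a^2 / b \<ge> 0" using b0 by simp
    hence "a^2 / b = 0" using h1 by linarith
    hence "a = 0" using b0 by simp
    thus ?thesis unfolding a_def by simp
  qed
  thus ?thesis using pS by blast
qed

lemma oproj_props:
  fixes S :: "'a::{real_inner,complete_space} set"
  assumes "subspace S" "closed S"
  shows "oproj S x \<in> S \<and> (\<forall>s\<in>S. inner (x - oproj S x) s = 0)"
proof -
  obtain p where p: "p \<in> S" "\<forall>s\<in>S. inner (x - p) s = 0" using proj_exists[OF assms] by blast
  have uniq: "q = p" if q: "q \<in> S" "\<forall>s\<in>S. inner (x - q) s = 0" for q
  proof -
    have d: "p - q \<in> S" using assms(1) p q by (simp add: subspace_diff)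
    have "inner (x - q) (p - q) - inner (x - p) (p - q) = 0" using p q d by simp
    moreover have "inner (p - q) (p - q) = inner (x - q) (p - q) - inner (x - p) (p - q)"
      by (simp add: inner_diff_left algebra_simps)
    ultimately have "inner (p - q) (p - q) = 0" by simp
    thus ?thesis by simp
  qed
  have "oproj S x = p" unfolding oproj_def
  proof (rule the_equality)
    show "p \<in> S \<and> (\<forall>s\<in>S. inner (x - p) s = 0)" using p by blast
    fix q assume "q \<in> S \<and> (\<forall>s\<in>S. inner (x - q) s = 0)"
    thus "q = p" using uniq by blast
  qed
  thus ?thesis using p by simp
qed

lemma oproj_unique:
  fixes S :: "'a::{real_inner,complete_space} set"
  assumes "subspace S" "closed S" "p \<in> S" "\<forall>s\<in>S. inner (x - p) s = 0"
  shows "oproj S x = p"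
proof -
  have q: "oproj S x \<in> S" "\<forall>s\<in>S. inner (x - oproj S x) s = 0" using oproj_props[OF assms(1,2)] by auto
  have d: "p - oproj S x \<in> S" using assms q by (simp add: subspace_diff)
  have "inner (x - oproj S x) (p - oproj S x) - inner (x - p) (p - oproj S x) = 0" using assms q d by simp
  moreover have "inner (p - oproj S x) (p - oproj S x) = inner (x - oproj S x) (p - oproj S x) - inner (x - p) (p - oproj S x)"
    by (simp add: inner_diff_left algebra_simps)
  ultimately have "inner (p - oproj S x) (p - oproj S x) = 0" by simp
  thus ?thesis by simp
qed

lemma oproj_norm:
  fixes S :: "'a::{real_inner,complete_space} set"
  assumes "subspace S" "closed S"
  shows "norm (oproj S x) \<le> norm x"
proof -
  have q: "oproj S x \<in> S" "\<forall>s\<in>S. inner (x - oproj S x) s = 0" using oproj_props[OF assms] by auto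
  have "inner (x - oproj S x) (oproj S x) = 0" using q by blast
  hence "orthogonal (oproj S x) (x - oproj S x)" unfolding orthogonal_def by (simp only: inner_commute)
  from norm_add_Pythagorean[OF this] have "norm x ^2 = norm (oproj S x)^2 + norm (x - oproj S x)^2" by simp
  hence "norm (oproj S x)^2 \<le> norm x^2" by simp
  thus ?thesis by (rule power2_le_imp_le) simp
qed



lemma dense_orth_zero:
  fixes D :: "'a::real_inner set"
  assumes "closure D = UNIV" "\<forall>x\<in>D. inner x w = 0"
  shows "w = 0"
proof -
  have cl: "closed {x. inner x w = 0}" by (intro closed_Collect_eq continuous_intros)
  have "D \<subseteq> {x. inner x w = 0}" using assms by auto
  hence "closure D \<subseteq> {x. inner x w = 0}" using cl by (rule closure_minimal)
  hence "w \<in> {x. inner x w = 0}" using assms(1) by blast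
  thus ?thesis by simp
qed

lemma adj_unique:
  fixes D :: "'a::real_inner set" and A :: "'a \<Rightarrow> 'b::real_inner"
  assumes dense: "closure D = UNIV" and h: "\<forall>x\<in>D. inner (A x) y = inner x z"
  shows "y \<in> adj_dom D A \<and> adj D A y = z"
proof
  show "y \<in> adj_dom D A" unfolding adj_dom_def using h by blast
  show "adj D A y = z" unfolding adj_def
  proof (rule the_equality)
    show "\<forall>x\<in>D. inner (A x) y = inner x z" by fact
    fix z' assume h': "\<forall>x\<in>D. inner (A x) y = inner x z'"
    have "\<forall>x\<in>D. inner x (z' - z) = 0" using h h' by (simp add: inner_diff_right)
    from dense_orth_zero[OF dense this] show "z' = z" by simp
  qed
qed

lemma adj_eq:
  fixes D :: "'a::real_inner set" and A :: "'a \<Rightarrow> 'b::real_inner"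
  assumes dense: "closure D = UNIV" and y: "y \<in> adj_dom D A" and x: "x \<in> D"
  shows "inner (A x) y = inner x (adj D A y)"
proof -
  obtain z where z: "\<forall>x\<in>D. inner (A x) y = inner x z" using y unfolding adj_dom_def by blast
  have "adj D A y = z" using adj_unique[OF dense z] by blast
  thus ?thesis using z x by simp
qed

lemma adj_linear:
  fixes D :: "'a::real_inner set" and A :: "'a \<Rightarrow> 'b::real_inner"
  assumes dense: "closure D = UNIV"
  shows "linear_on (adj_dom D A) (adj D A)"
proof -
  have z: "0 \<in> adj_dom D A" using adj_unique[OF dense, of A 0 0] by simp
  have add: "y1 + y2 \<in> adj_dom D A \<and> adj D A (y1 + y2) = adj D A y1 + adj D A y2"
    if "y1 \<in> adj_dom D A" "y2 \<in> adj_dom D A" for y1 y2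
    by (rule adj_unique[OF dense]) (simp add: inner_add_right adj_eq[OF dense that(1)] adj_eq[OF dense that(2)])
  have sc: "c *\<^sub>R y \<in> adj_dom D A \<and> adj D A (c *\<^sub>R y) = c *\<^sub>R adj D A y"
    if "y \<in> adj_dom D A" for y c
    by (rule adj_unique[OF dense]) (simp add: adj_eq[OF dense that])
  have "subspace (adj_dom D A)" unfolding subspace_def using z add sc by blast
  thus ?thesis unfolding linear_on_def using add sc by blast
qed

lemma linear_on_diff:
  assumes "linear_on D A" "x \<in> D" "y \<in> D"
  shows "x - y \<in> D \<and> A (x - y) = A x - A y"
proof -
  have sub: "subspace D" using assms(1) unfolding linear_on_def by blast
  have my: "(-1) *\<^sub>R y \<in> D" using subspace_scale[OF sub assms(3)] by blast
  have "A ((-1) *\<^sub>R y) = (-1) *\<^sub>R A y" using assms(1,3) unfolding linear_on_def by blast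
  hence "A ((-1) *\<^sub>R y) = - A y" by simp
  moreover have "A (x + (-1) *\<^sub>R y) = A x + A ((-1) *\<^sub>R y)" using assms(1,2) my unfolding linear_on_def by blast
  ultimately have "A (x + (-1) *\<^sub>R y) = A x - A y" by simp
  moreover have "x + (-1) *\<^sub>R y = x - y" by simp
  ultimately show ?thesis using sub assms by (simp add: subspace_diff)
qed

lemma linear_on_0: assumes "linear_on D A" shows "0 \<in> D \<and> A 0 = 0"
proof -
  have "0 \<in> D" using assms unfolding linear_on_def by (simp add: subspace_0)
  moreover have "A (0 *\<^sub>R 0) = 0 *\<^sub>R A 0" using assms calculation unfolding linear_on_def by blast
  ultimately show ?thesis by (metis scale_zero_left)
qed

lemma linear_on_ran: assumes "linear_on D A" shows "subspace (ran_op D A)"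
proof -
  have z: "0 \<in> ran_op D A" using linear_on_0[OF assms] unfolding ran_op_def by force
  have a: "u + v \<in> ran_op D A" if uv: "u \<in> ran_op D A" "v \<in> ran_op D A" for u v
  proof -
    obtain x y where "x \<in> D" "y \<in> D" "u = A x" "v = A y" using uv unfolding ran_op_def by blast
    moreover have "x + y \<in> D" "A (x + y) = A x + A y" using assms calculation unfolding linear_on_def subspace_def by auto
    ultimately show ?thesis unfolding ran_op_def by (metis image_eqI)
  qed
  have c: "c *\<^sub>R u \<in> ran_op D A" if u: "u \<in> ran_op D A" for u c
  proof -
    obtain x where "x \<in> D" "u = A x" using u unfolding ran_op_def by blast
    moreover have "c *\<^sub>R x \<in> D" "A (c *\<^sub>R x) = c *\<^sub>R A x" using assms calculation unfolding linear_on_def subspace_def by auto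
    ultimately show ?thesis unfolding ran_op_def by (metis image_eqI)
  qed
  show ?thesis unfolding subspace_def using z a c by blast
qed

lemma linear_on_ker: assumes "linear_on D A" shows "subspace (ker_op D A)"
  using assms linear_on_0[OF assms] unfolding linear_on_def subspace_def ker_op_def by auto

lemma ker_orth_ran:
  fixes D :: "'a::real_inner set" and A :: "'a \<Rightarrow> 'b::real_inner"
  assumes dense: "closure D = UNIV"
  shows "(\<forall>a\<in>ran_op D A. inner a y = 0) \<longleftrightarrow> y \<in> ker_op (adj_dom D A) (adj D A)"
proof
  assume "\<forall>a\<in>ran_op D A. inner a y = 0"
  hence "\<forall>x\<in>D. inner (A x) y = inner x 0" unfolding ran_op_def by auto
  from adj_unique[OF dense this] show "y \<in> ker_op (adj_dom D A) (adj D A)" unfolding ker_op_def by simp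
next
  assume "y \<in> ker_op (adj_dom D A) (adj D A)"
  thus "\<forall>a\<in>ran_op D A. inner a y = 0" unfolding ker_op_def ran_op_def
    using adj_eq[OF dense] by fastforce
qed

lemma ran_adj_orth_ker:
  fixes D :: "'a::real_inner set" and A :: "'a \<Rightarrow> 'b::real_inner"
  assumes dense: "closure D = UNIV" "a \<in> ran_op (adj_dom D A) (adj D A)" "b \<in> ker_op D A"
  shows "inner a b = 0"
proof -
  obtain y where y: "y \<in> adj_dom D A" "a = adj D A y" using assms unfolding ran_op_def by blast
  have "inner (A b) y = inner b (adj D A y)" using adj_eq[OF dense(1) y(1)] assms(3) unfolding ker_op_def by blast
  moreover have "A b = 0" using assms(3) unfolding ker_op_def by blast
  ultimately have "inner b a = 0" using y by simp
  thus ?thesis by (simp only: inner_commute)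
qed

lemma mem_graph: "p \<in> {(x, A x) | x. x \<in> D} \<longleftrightarrow> fst p \<in> D \<and> snd p = A (fst p)"
  by (cases p) auto

lemma graph_sub:
  assumes lin: "linear_on D A" shows "subspace {(x, A x) | x. x \<in> D}"
  unfolding subspace_def mem_graph
  using linear_on_0[OF lin] lin unfolding linear_on_def subspace_def by simp

lemma orth_ran_adj_ker:
  fixes D :: "'a::{real_inner,complete_space} set" and A :: "'a \<Rightarrow> 'b::{real_inner,complete_space}"
  assumes op: "dd_closed_op D A" and h: "\<forall>a\<in>ran_op (adj_dom D A) (adj D A). inner a z = 0"
  shows "z \<in> ker_op D A"
proof -
  have lin: "linear_on D A" and dense: "closure D = UNIV" and clG: "closed {(x, A x) | x. x \<in> D}"
    using op unfolding dd_closed_op_def by auto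
  obtain q where q: "q \<in> {(x, A x) | x. x \<in> D}" "\<forall>s\<in>{(x, A x) | x. x \<in> D}. inner ((z, 0) - q) s = 0"
    using proj_exists[OF graph_sub[OF lin] clG] by blast
  define p where "p = fst q"
  have p: "p \<in> D" "q = (p, A p)" using q(1) unfolding mem_graph p_def by (auto simp: prod_eq_iff)
  have o: "inner (A x) (A p) = inner x (z - p)" if "x \<in> D" for x
  proof -
    have "(x, A x) \<in> {(x, A x) | x. x \<in> D}" using that unfolding mem_graph by simp
    hence "inner ((z, 0) - q) (x, A x) = 0" using q(2) by blast
    hence "inner (z - p) x - inner (A p) (A x) = 0" using p(2) by (simp add: inner_diff_left)
    moreover have "inner (A x) (A p) = inner (A p) (A x)" "inner x (z - p) = inner (z - p) x"
      by (rule inner_commute)+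
    ultimately show ?thesis by linarith
  qed
  from adj_unique[OF dense, of A "A p" "z - p"] o
  have ad: "A p \<in> adj_dom D A" "adj D A (A p) = z - p" by blast+
  have "z - p \<in> ran_op (adj_dom D A) (adj D A)" using ad unfolding ran_op_def by (metis image_eqI)
  hence 1: "inner (z - p) z = 0" using h by blast
  have "inner p (z - p) = inner (z - p) p" by (rule inner_commute)
  hence 2: "inner (z - p) p = inner (A p) (A p)" using o[OF p(1)] by simp
  have "inner (z - p) (z - p) + inner (A p) (A p) = 0" using 1 2 by (simp add: inner_diff_right)
  hence "inner (z - p) (z - p) = 0 \<and> inner (A p) (A p) = 0"
    by (metis add_nonneg_eq_0_iff inner_ge_zero)
  hence "z = p" "A p = 0" by simp_all
  thus ?thesis using p unfolding ker_op_def by simp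
qed

lemma ker_closed:
  fixes D :: "'a::{real_inner,complete_space} set" and A :: "'a \<Rightarrow> 'b::{real_inner,complete_space}"
  assumes op: "dd_closed_op D A"
  shows "closed (ker_op D A)"
proof -
  have dense: "closure D = UNIV" using op unfolding dd_closed_op_def by auto
  have "ker_op D A = {x. \<forall>a\<in>ran_op (adj_dom D A) (adj D A). inner a x = 0}"
  proof (intro set_eqI iffI)
    fix x assume "x \<in> ker_op D A"
    thus "x \<in> {x. \<forall>a\<in>ran_op (adj_dom D A) (adj D A). inner a x = 0}"
      using ran_adj_orth_ker[OF dense] by blast
  next
    fix x assume "x \<in> {x. \<forall>a\<in>ran_op (adj_dom D A) (adj D A). inner a x = 0}"
    hence "\<forall>a\<in>ran_op (adj_dom D A) (adj D A). inner a x = 0" by simp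
    thus "x \<in> ker_op D A" by (rule orth_ran_adj_ker[OF op])
  qed
  thus ?thesis by (simp only: closed_orth_set)
qed



lemma approx_step:
  fixes D :: "'a::{real_inner,complete_space} set" and A :: "'a \<Rightarrow> 'b::{real_inner,complete_space}"
  assumes lin: "linear_on D A" and clR: "closed (ran_op D A)"
  shows "\<exists>M>0. \<forall>y\<in>ran_op D A. \<exists>x\<in>D. norm x \<le> M * norm y \<and> norm (A x - y) \<le> norm y / 2"
proof -
  define R where "R = ran_op D A"
  have subR: "subspace R" unfolding R_def by (rule linear_on_ran[OF lin])
  have D0: "0 \<in> D" "A 0 = 0" using linear_on_0[OF lin] by auto
  have R0: "0 \<in> R" using subR by (simp add: subspace_0)
  define F where "F n = closure (A ` (D \<inter> cball 0 (real n)))" for n :: nat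
  have FR: "F n \<subseteq> R" for n
  proof -
    have "A ` (D \<inter> cball 0 (real n)) \<subseteq> R" unfolding R_def ran_op_def by blast
    thus ?thesis unfolding F_def using clR R_def by (simp add: closure_minimal)
  qed
  have cm: "completely_metrizable_space (top_of_set R)"
    using completely_metrizable_space_closedin[OF completely_metrizable_space_euclidean] clR
    unfolding R_def closed_closedin by blast
  have Fcl: "closedin (top_of_set R) (F n)" for n
    using FR closed_subset unfolding F_def by (metis closed_closure)
  have UF: "\<Union>(range F) = R"
  proof
    show "\<Union>(range F) \<subseteq> R" using FR by blast
    show "R \<subseteq> \<Union>(range F)"
    proof
      fix y assume "y \<in> R"
      then obtain x where x: "x \<in> D" "y = A x" unfolding R_def ran_op_def by blast
      obtain n :: nat where n: "norm x \<le> real n" using real_arch_simple by blast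
      have "x \<in> D \<inter> cball 0 (real n)" using x n by simp
      hence "y \<in> A ` (D \<inter> cball 0 (real n))" by (rule image_eqI[of y A x, OF x(2)])
      hence "y \<in> F n" unfolding F_def by (rule closure_subset[THEN subsetD])
      thus "y \<in> \<Union>(range F)" by blast
    qed
  qed
  have "\<exists>n. top_of_set R interior_of F n \<noteq> {}"
  proof (rule ccontr)
    assume "\<not> ?thesis"
    hence "top_of_set R interior_of \<Union>(range F) = {}"
      using cm Fcl by (intro Baire_category_alt) auto
    moreover have "top_of_set R interior_of R = R"
      using interior_of_topspace[of "top_of_set R"] by simp
    ultimately show False using UF R0 by simp
  qed
  then obtain n y0 where y0: "y0 \<in> top_of_set R interior_of F n" by blast
  have "openin (top_of_set R) (top_of_set R interior_of F n)" by simp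
  then obtain r where r: "r > 0" "\<And>y. y \<in> R \<Longrightarrow> dist y y0 < r \<Longrightarrow> y \<in> top_of_set R interior_of F n"
    using y0 unfolding openin_euclidean_subtopology_iff by blast
  have intF: "top_of_set R interior_of F n \<subseteq> F n" by (rule interior_of_subset)
  have y0R: "y0 \<in> R" using y0 intF FR by blast
  have y0F: "y0 \<in> F n" using y0 intF by blast
  have C: "\<exists>x\<in>D. norm x \<le> 2 * real n \<and> norm (A x - y) < e" if yR: "y \<in> R" and ny: "norm y < r" and e: "e > 0" for y e
  proof -
    have "y0 + y \<in> R" using subR y0R yR by (simp add: subspace_add)
    moreover have "dist (y0 + y) y0 < r" using ny by (simp add: dist_norm)
    ultimately have "y0 + y \<in> F n" using r intF by blast
    hence "\<forall>\<epsilon>>0. \<exists>u\<in>A ` (D \<inter> cball 0 (real n)). dist u (y0 + y) < \<epsilon>"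
      unfolding F_def closure_approachable .
    then obtain u1 where "u1 \<in> A ` (D \<inter> cball 0 (real n))" "dist u1 (y0 + y) < e/2"
      using half_gt_zero[OF e] by blast
    then obtain x1 where x1: "x1 \<in> D" "norm x1 \<le> real n" "dist (A x1) (y0 + y) < e/2" by auto
    have "\<forall>\<epsilon>>0. \<exists>u\<in>A ` (D \<inter> cball 0 (real n)). dist u y0 < \<epsilon>"
      using y0F unfolding F_def closure_approachable .
    then obtain u2 where "u2 \<in> A ` (D \<inter> cball 0 (real n))" "dist u2 y0 < e/2"
      using half_gt_zero[OF e] by blast
    then obtain x2 where x2: "x2 \<in> D" "norm x2 \<le> real n" "dist (A x2) y0 < e/2" by auto
    have d: "x1 - x2 \<in> D \<and> A (x1 - x2) = A x1 - A x2" using linear_on_diff[OF lin x1(1) x2(1)] .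
    have "norm (x1 - x2) \<le> norm x1 + norm x2" by (rule norm_triangle_ineq4)
    hence nx: "norm (x1 - x2) \<le> 2 * real n" using x1 x2 by simp
    have "A x1 - A x2 - y = (A x1 - (y0 + y)) - (A x2 - y0)" by simp
    hence "norm (A x1 - A x2 - y) \<le> norm (A x1 - (y0 + y)) + norm (A x2 - y0)"
      by (metis norm_triangle_ineq4)
    also have "\<dots> < e" using x1(3) x2(3) by (simp add: dist_norm)
    finally show ?thesis using d nx by auto
  qed
  define M where "M = 4 * (real n + 1) / r"
  have M0: "M > 0" using r by (simp add: M_def)
  have main: "\<exists>x\<in>D. norm x \<le> M * norm y \<and> norm (A x - y) \<le> norm y / 2" if yR: "y \<in> R" for y
  proof (cases "y = 0")
    case True thus ?thesis using D0 by (intro bexI[of _ 0]) auto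
  next
    case False
    have ny0: "norm y > 0" using False by simp
    define t where "t = r / (2 * norm y)"
    have t0: "t > 0" using ny0 r by (simp add: t_def)
    have tyR: "t *\<^sub>R y \<in> R" using subR yR by (simp add: subspace_scale)
    have nty: "norm (t *\<^sub>R y) = r / 2" using ny0 t0 r(1) by (simp add: t_def)
    hence "norm (t *\<^sub>R y) < r" using r by simp
    from C[OF tyR this, of "r/4"] r obtain x' where x': "x' \<in> D" "norm x' \<le> 2 * real n" "norm (A x' - t *\<^sub>R y) < r/4"
      by auto
    define x where "x = (1/t) *\<^sub>R x'"
    have xD: "x \<in> D" unfolding x_def using lin x' unfolding linear_on_def by (simp add: subspace_scale)
    have Ax: "A x = (1/t) *\<^sub>R A x'" unfolding x_def using lin x' unfolding linear_on_def by blast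
    have "norm x = norm x' / t" unfolding x_def using t0 by simp
    also have "\<dots> \<le> 2 * real n / t" using x' t0 by (simp add: divide_right_mono)
    also have "\<dots> = 4 * real n / r * norm y" using r ny0 by (simp add: t_def field_simps)
    also have "\<dots> \<le> M * norm y" unfolding M_def using r ny0
      by (intro mult_right_mono divide_right_mono) auto
    finally have nx: "norm x \<le> M * norm y" .
    have "A x - y = (1/t) *\<^sub>R (A x' - t *\<^sub>R y)" using Ax t0 by (simp add: algebra_simps)
    hence "norm (A x - y) = norm (A x' - t *\<^sub>R y) / t" using t0 by simp
    also have "\<dots> \<le> (r/4) / t" using x'(3) t0 by (intro divide_right_mono) auto
    also have "\<dots> = norm y / 2" using r ny0 by (simp add: t_def field_simps)
    finally show ?thesis using xD nx by blast
  qed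
  show ?thesis using M0 main unfolding R_def by blast
qed



lemma open_mapping_exact:
  fixes D :: "'a::{real_inner,complete_space} set" and A :: "'a \<Rightarrow> 'b::{real_inner,complete_space}"
  assumes lin: "linear_on D A" and clG: "closed {(x, A x) | x. x \<in> D}" and clR: "closed (ran_op D A)"
  shows "\<exists>M>0. \<forall>y\<in>ran_op D A. \<exists>x\<in>D. A x = y \<and> norm x \<le> M * norm y"
proof -
  define R where "R = ran_op D A"
  have subR: "subspace R" unfolding R_def by (rule linear_on_ran[OF lin])
  have subD: "subspace D" using lin unfolding linear_on_def by simp
  have D0: "0 \<in> D" "A 0 = 0" using linear_on_0[OF lin] by auto
  obtain M where M: "M > 0" "\<forall>y\<in>R. \<exists>x\<in>D. norm x \<le> M * norm y \<and> norm (A x - y) \<le> norm y / 2"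
    using approx_step[OF lin clR] unfolding R_def by blast
  hence "\<forall>y. \<exists>x. y \<in> R \<longrightarrow> (x \<in> D \<and> norm x \<le> M * norm y \<and> norm (A x - y) \<le> norm y / 2)" by meson
  from choice[OF this] obtain phi where phi: "\<And>y. y \<in> R \<Longrightarrow> phi y \<in> D \<and> norm (phi y) \<le> M * norm y \<and> norm (A (phi y) - y) \<le> norm y / 2"
    by meson
  have main: "\<exists>x\<in>D. A x = y \<and> norm x \<le> (2*M) * norm y" if yR: "y \<in> R" for y
  proof -
    define r where "r = rec_nat y (\<lambda>_ z. z - A (phi z))"
    have r0: "r 0 = y" unfolding r_def by simp
    have rS: "r (Suc k) = r k - A (phi (r k))" for k unfolding r_def by simp
    have rR: "r k \<in> R \<and> norm (r k) \<le> norm y / 2^k" for k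
    proof (induction k)
      case 0 show ?case using yR r0 by simp
    next
      case (Suc k)
      have a: "phi (r k) \<in> D" "norm (A (phi (r k)) - r k) \<le> norm (r k) / 2" using phi Suc.IH by auto
      have "A (phi (r k)) \<in> R" using a(1) unfolding R_def ran_op_def by (rule imageI)
      hence "r (Suc k) \<in> R" using Suc.IH subR rS by (simp add: subspace_diff)
      moreover have "norm (r (Suc k)) = norm (A (phi (r k)) - r k)" using rS by (simp add: norm_minus_commute)
      moreover have "norm (r k) / 2 \<le> norm y / 2^Suc k" using Suc.IH by (simp add: divide_right_mono)
      ultimately show ?case using a(2) by linarith
    qed
    have xk: "phi (r k) \<in> D \<and> norm (phi (r k)) \<le> M * norm y / 2^k" for k
    proof -
      have "phi (r k) \<in> D" "norm (phi (r k)) \<le> M * norm (r k)" using phi rR by auto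
      moreover have "M * norm (r k) \<le> M * (norm y / 2^k)" using rR M(1) by (intro mult_left_mono) auto
      ultimately show ?thesis by simp
    qed
    define s where "s N = (\<Sum>k<N. phi (r k))" for N
    have sD: "s N \<in> D \<and> A (s N) = y - r N" for N
    proof (induction N)
      case 0 show ?case using D0 r0 by (simp add: s_def)
    next
      case (Suc N)
      have sS: "s (Suc N) = s N + phi (r N)" by (simp add: s_def)
      have "s N + phi (r N) \<in> D" using Suc.IH xk subD by (simp add: subspace_add)
      moreover have "A (s N + phi (r N)) = A (s N) + A (phi (r N))"
        using lin Suc.IH xk unfolding linear_on_def by blast
      ultimately show ?case using sS Suc.IH rS by simp
    qed
    define c where "c = 2 * M * norm y"
    have c0: "c \<ge> 0" using M(1) by (simp add: c_def)
    have sb: "norm (s N - s K) \<le> c * (1 / 2^K - 1 / 2^N)" if KN: "K \<le> N" for K N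
      using KN
    proof (induction N rule: dec_induct)
      case base show ?case by simp
    next
      case (step N)
      have "s (Suc N) - s K = (s N - s K) + phi (r N)" by (simp add: s_def)
      hence "norm (s (Suc N) - s K) \<le> norm (s N - s K) + norm (phi (r N))"
        by (metis norm_triangle_ineq)
      also have "\<dots> \<le> c * (1 / 2^K - 1 / 2^N) + M * norm y / 2^N" using step.IH xk by (intro add_mono) auto
      also have "\<dots> = c * (1 / 2^K - 1 / 2^Suc N)" by (simp add: c_def field_simps)
      finally show ?case .
    qed
    have Cs: "Cauchy s"
    proof (rule CauchyI)
      fix e :: real assume e: "e > 0"
      have "0 < e / (2 * (c + 1))" using e c0 by simp
      from real_arch_pow_inv[OF this, of "1/2"] obtain K where K: "(1/2)^K < e / (2 * (c + 1))" by auto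
      show "\<exists>K. \<forall>m\<ge>K. \<forall>n\<ge>K. norm (s m - s n) < e"
      proof (rule exI[of _ K], intro allI impI)
        fix m n assume mn: "K \<le> m" "K \<le> n"
        have "s m - s n = (s m - s K) - (s n - s K)" by simp
        hence "norm (s m - s n) \<le> norm (s m - s K) + norm (s n - s K)" by (metis norm_triangle_ineq4)
        also have "\<dots> \<le> c * (1 / 2^K) + c * (1 / 2^K)"
        proof (intro add_mono)
          show "norm (s m - s K) \<le> c * (1 / 2^K)"
            using sb[OF mn(1)] c0 by (smt (verit) mult_left_mono divide_nonneg_nonneg zero_le_power)
          show "norm (s n - s K) \<le> c * (1 / 2^K)"
            using sb[OF mn(2)] c0 by (smt (verit) mult_left_mono divide_nonneg_nonneg zero_le_power)
        qed
        also have "\<dots> = 2 * c * (1/2)^K" by (simp add: power_one_over)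
        also have "\<dots> \<le> 2 * (c + 1) * (1/2)^K" by (intro mult_right_mono) auto
        also have "\<dots> < 2 * (c + 1) * (e / (2 * (c + 1)))" using K c0 by (intro mult_strict_left_mono) auto
        also have "\<dots> = e" using c0 by simp
        finally show "norm (s m - s n) < e" .
      qed
    qed
    then obtain x where sx: "s \<longlonglongrightarrow> x" using Cauchy_convergent_iff convergent_def by blast
    have rz: "r \<longlonglongrightarrow> 0"
    proof (rule Lim_null_comparison)
      show "\<forall>\<^sub>F k in sequentially. norm (r k) \<le> norm y * (1/2)^k"
        using rR by (simp add: power_one_over field_simps)
      show "(\<lambda>k. norm y * (1/2)^k) \<longlonglongrightarrow> 0"
        by (rule tendsto_mult_right_zero[OF LIMSEQ_power_zero]) simp
    qed
    have "(\<lambda>N. y - r N) \<longlonglongrightarrow> y - 0" by (rule tendsto_diff[OF tendsto_const rz])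
    hence Asy: "(\<lambda>N. A (s N)) \<longlonglongrightarrow> y" using sD by simp
    have t: "(\<lambda>N. (s N, A (s N))) \<longlonglongrightarrow> (x, y)" by (rule tendsto_Pair[OF sx Asy])
    have m: "\<forall>N. (s N, A (s N)) \<in> {(x, A x) | x. x \<in> D}" using sD unfolding mem_graph by simp
    have "(x, y) \<in> {(x, A x) | x. x \<in> D}" by (rule closed_sequentially[OF clG m[rule_format] t])
    hence xD: "x \<in> D" "A x = y" unfolding mem_graph by simp_all
    have "norm (s N) \<le> c" for N
    proof -
      have "norm (s N - s 0) \<le> c * (1 / 2^0 - 1 / 2^N)" by (rule sb) simp
      moreover have "c * (1 / 2^0 - 1 / 2^N) \<le> c" using c0 by (simp add: mult_left_le)
      ultimately show ?thesis by (simp add: s_def)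
    qed
    hence "norm x \<le> c" using LIMSEQ_le_const2[OF tendsto_norm[OF sx], of c] by simp
    thus ?thesis using xD by (auto simp: c_def)
  qed
  show ?thesis using main M(1) unfolding R_def by (intro exI[of _ "2*M"]) auto
qed

lemma friedrichs:
  fixes D :: "'a::{real_inner,complete_space} set" and A :: "'a \<Rightarrow> 'b::{real_inner,complete_space}"
  assumes op: "dd_closed_op D A" and clR: "closed (ran_op D A)"
  shows "\<exists>c>0. \<forall>x\<in>D. (\<forall>n\<in>ker_op D A. inner n x = 0) \<longrightarrow> norm x \<le> c * norm (A x)"
proof -
  have lin: "linear_on D A" and clG: "closed {(x, A x) | x. x \<in> D}"
    using op unfolding dd_closed_op_def by auto
  obtain M where M: "M > 0" "\<forall>y\<in>ran_op D A. \<exists>x\<in>D. A x = y \<and> norm x \<le> M * norm y"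
    using open_mapping_exact[OF lin clG clR] by blast
  have "norm x \<le> M * norm (A x)" if x: "x \<in> D" "\<forall>n\<in>ker_op D A. inner n x = 0" for x
  proof -
    have "A x \<in> ran_op D A" unfolding ran_op_def using x(1) by (rule imageI)
    then obtain x' where x': "x' \<in> D" "A x' = A x" "norm x' \<le> M * norm (A x)" using M(2) by blast
    have "x - x' \<in> D \<and> A (x - x') = A x - A x'" using linear_on_diff[OF lin x(1) x'(1)] .
    hence "x - x' \<in> ker_op D A" using x'(2) unfolding ker_op_def by simp
    hence "inner (x - x') x = 0" using x(2) by blast
    hence "inner x x = inner x' x" by (simp add: inner_diff_left)
    also have "\<dots> \<le> norm x' * norm x" by (rule norm_cauchy_schwarz)
    finally have "norm x * norm x \<le> norm x' * norm x" by (simp add: power2_norm_eq_inner[symmetric] power2_eq_square)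
    hence "norm x \<le> norm x'"
      by (cases "norm x = 0") (auto simp: mult_le_cancel_right)
    thus ?thesis using x'(3) by simp
  qed
  thus ?thesis using M(1) by blast
qed



lemma adj_friedrichs_gen:
  fixes D :: "'a::{real_inner,complete_space} set" and A :: "'a \<Rightarrow> 'b::{real_inner,complete_space}"
  assumes op: "dd_closed_op D A"
    and X: "\<And>v. v \<in> D \<Longrightarrow> (\<forall>n\<in>ker_op D A. inner n v = 0) \<Longrightarrow> v \<in> X"
    and c: "\<And>v. v \<in> D \<Longrightarrow> v \<in> X \<Longrightarrow> norm v \<le> c * norm (A v)" and c0: "c \<ge> 0"
    and q: "q \<in> adj_dom D A" "q \<in> ran_op D A"
  shows "norm q \<le> c * norm (adj D A q)"
proof -
  have lin: "linear_on D A" and dense: "closure D = UNIV" using op unfolding dd_closed_op_def by auto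
  have subN: "subspace (ker_op D A)" by (rule linear_on_ker[OF lin])
  have clN: "closed (ker_op D A)" by (rule ker_closed[OF op])
  obtain v where v: "v \<in> D" "q = A v" using q(2) unfolding ran_op_def by blast
  define p where "p = oproj (ker_op D A) v"
  have p: "p \<in> ker_op D A" "\<forall>s\<in>ker_op D A. inner (v - p) s = 0"
    using oproj_props[OF subN clN] unfolding p_def by blast+
  have pD: "p \<in> D" "A p = 0" using p(1) unfolding ker_op_def by auto
  have v': "v - p \<in> D \<and> A (v - p) = A v - A p" by (rule linear_on_diff[OF lin v(1) pD(1)])
  hence vD: "v - p \<in> D" and Av': "A (v - p) = q" using pD v by auto
  have orth: "\<forall>n\<in>ker_op D A. inner n (v - p) = 0"
  proof
    fix n assume "n \<in> ker_op D A"
    hence "inner (v - p) n = 0" using p(2) by blast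
    thus "inner n (v - p) = 0" by (simp only: inner_commute)
  qed
  have nv: "norm (v - p) \<le> c * norm q" using c[OF vD X[OF vD orth]] Av' by simp
  have "inner q q = inner (A (v - p)) q" using Av' by simp
  also have "\<dots> = inner (v - p) (adj D A q)" by (rule adj_eq[OF dense q(1) vD])
  also have "\<dots> \<le> norm (v - p) * norm (adj D A q)" by (rule norm_cauchy_schwarz)
  also have "\<dots> \<le> (c * norm q) * norm (adj D A q)" by (intro mult_right_mono nv) simp
  finally have "norm q * norm q \<le> norm q * (c * norm (adj D A q))"
    by (simp add: power2_norm_eq_inner[symmetric] power2_eq_square mult_ac)
  show ?thesis
  proof (cases "norm q = 0")
    case True thus ?thesis using c0 by simp
  next
    case False
    hence "norm q > 0" by simp
    thus ?thesis using \<open>norm q * norm q \<le> norm q * (c * norm (adj D A q))\<close> by (simp add: mult_le_cancel_left)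
  qed
qed

lemma adj_closed_range:
  fixes D :: "'a::{real_inner,complete_space} set" and A :: "'a \<Rightarrow> 'b::{real_inner,complete_space}"
  assumes op: "dd_closed_op D A" and clR: "closed (ran_op D A)"
  shows "closed (ran_op (adj_dom D A) (adj D A))"
proof -
  have lin: "linear_on D A" and dense: "closure D = UNIV" using op unfolding dd_closed_op_def by auto
  have linS: "linear_on (adj_dom D A) (adj D A)" by (rule adj_linear[OF dense])
  have subR: "subspace (ran_op D A)" by (rule linear_on_ran[OF lin])
  obtain c where c: "c > 0" "\<forall>x\<in>D. (\<forall>n\<in>ker_op D A. inner n x = 0) \<longrightarrow> norm x \<le> c * norm (A x)"
    using friedrichs[OF op clR] by blast
  have fr: "norm q \<le> c * norm (adj D A q)" if "q \<in> adj_dom D A" "q \<in> ran_op D A" for q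
    by (rule adj_friedrichs_gen[OF op, of "{v. \<forall>n\<in>ker_op D A. inner n v = 0}"]) (use c that in auto)
  show ?thesis unfolding closed_sequential_limits
  proof (intro allI impI, elim conjE)
    fix w l assume wS: "\<forall>n. w n \<in> ran_op (adj_dom D A) (adj D A)" and wl: "w \<longlonglongrightarrow> l"
    have "\<forall>n. \<exists>y. y \<in> adj_dom D A \<and> w n = adj D A y" using wS unfolding ran_op_def by blast
    from choice[OF this] obtain y where y: "\<And>n. y n \<in> adj_dom D A" "\<And>n. w n = adj D A (y n)" by blast
    define q where "q n = oproj (ran_op D A) (y n)" for n
    have qp: "q n \<in> ran_op D A" "\<forall>s\<in>ran_op D A. inner (y n - q n) s = 0" for n
      using oproj_props[OF subR clR] unfolding q_def by blast+
    have qk: "q n \<in> adj_dom D A \<and> adj D A (q n) = w n" for n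
    proof -
      have "\<forall>a\<in>ran_op D A. inner a (y n - q n) = 0"
      proof
        fix a assume "a \<in> ran_op D A"
        hence "inner (y n - q n) a = 0" using qp(2) by blast
        thus "inner a (y n - q n) = 0" by (simp only: inner_commute)
      qed
      hence k: "y n - q n \<in> ker_op (adj_dom D A) (adj D A)" using ker_orth_ran[OF dense] by blast
      hence kD: "y n - q n \<in> adj_dom D A" "adj D A (y n - q n) = 0" unfolding ker_op_def by auto
      have "y n - (y n - q n) \<in> adj_dom D A \<and> adj D A (y n - (y n - q n)) = adj D A (y n) - adj D A (y n - q n)"
        by (rule linear_on_diff[OF linS y(1) kD(1)])
      thus ?thesis using kD y(2) by simp
    qed
    have Cw: "Cauchy w" using wl by (rule LIMSEQ_imp_Cauchy)
    have Cq: "Cauchy q"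
    proof (rule CauchyI)
      fix e :: real assume e: "e > 0"
      obtain K where K: "\<forall>m\<ge>K. \<forall>n\<ge>K. norm (w m - w n) < e / c"
        using CauchyD[OF Cw, of "e / c"] e c(1) by (auto simp: dist_norm)
      show "\<exists>K. \<forall>m\<ge>K. \<forall>n\<ge>K. norm (q m - q n) < e"
      proof (rule exI[of _ K], intro allI impI)
        fix m n assume mn: "K \<le> m" "K \<le> n"
        have d: "q m - q n \<in> adj_dom D A \<and> adj D A (q m - q n) = adj D A (q m) - adj D A (q n)"
          using linear_on_diff[OF linS] qk by blast
        have dR: "q m - q n \<in> ran_op D A" using subR qp(1) by (simp add: subspace_diff)
        have "norm (q m - q n) \<le> c * norm (adj D A (q m - q n))" using fr d dR by blast
        also have "\<dots> = c * norm (w m - w n)" using d qk by simp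
        also have "\<dots> < c * (e / c)" using K mn c(1) by (intro mult_strict_left_mono) auto
        also have "\<dots> = e" using c(1) by simp
        finally show "norm (q m - q n) < e" .
      qed
    qed
    then obtain q0 where q0: "q \<longlonglongrightarrow> q0" using Cauchy_convergent_iff convergent_def by blast
    have "inner (A x) q0 = inner x l" if x: "x \<in> D" for x
    proof -
      have "(\<lambda>n. inner (A x) (q n)) \<longlonglongrightarrow> inner (A x) q0" by (rule tendsto_inner[OF tendsto_const q0])
      moreover have "(\<lambda>n. inner (A x) (q n)) = (\<lambda>n. inner x (w n))"
      proof (rule ext)
        fix n
        have "inner (A x) (q n) = inner x (adj D A (q n))" using adj_eq[OF dense _ x, of "q n" A] qk by blast
        thus "inner (A x) (q n) = inner x (w n)" using qk by simp
      qed
      moreover have "(\<lambda>n. inner x (w n)) \<longlonglongrightarrow> inner x l" by (rule tendsto_inner[OF tendsto_const wl])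
      ultimately show ?thesis using LIMSEQ_unique by metis
    qed
    hence "q0 \<in> adj_dom D A \<and> adj D A q0 = l" using adj_unique[OF dense] by blast
    thus "l \<in> ran_op (adj_dom D A) (adj D A)" unfolding ran_op_def by (metis image_eqI)
  qed
qed

lemma orth_ker_in_ran_adj:
  fixes D :: "'a::{real_inner,complete_space} set" and A :: "'a \<Rightarrow> 'b::{real_inner,complete_space}"
  assumes op: "dd_closed_op D A" and clR: "closed (ran_op D A)"
    and w: "\<forall>n\<in>ker_op D A. inner n w = 0"
  shows "w \<in> ran_op (adj_dom D A) (adj D A)"
proof -
  have dense: "closure D = UNIV" using op unfolding dd_closed_op_def by auto
  have subS: "subspace (ran_op (adj_dom D A) (adj D A))" by (rule linear_on_ran[OF adj_linear[OF dense]])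
  have clS: "closed (ran_op (adj_dom D A) (adj D A))" by (rule adj_closed_range[OF op clR])
  define p where "p = oproj (ran_op (adj_dom D A) (adj D A)) w"
  have p: "p \<in> ran_op (adj_dom D A) (adj D A)" "\<forall>s\<in>ran_op (adj_dom D A) (adj D A). inner (w - p) s = 0"
    using oproj_props[OF subS clS] unfolding p_def by blast+
  have "\<forall>a\<in>ran_op (adj_dom D A) (adj D A). inner a (w - p) = 0"
  proof
    fix a assume "a \<in> ran_op (adj_dom D A) (adj D A)"
    hence "inner (w - p) a = 0" using p(2) by blast
    thus "inner a (w - p) = 0" by (simp only: inner_commute)
  qed
  hence "w - p \<in> ker_op D A" by (rule orth_ran_adj_ker[OF op])
  hence 1: "inner (w - p) w = 0" using w by blast
  have 2: "inner (w - p) p = 0" using p by blast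
  have "inner (w - p) (w - p) = 0" using 1 2 by (simp add: inner_diff_right)
  hence "w = p" by simp
  thus ?thesis using p(1) by simp
qed

lemma fp_const_valid:
  fixes D :: "'a::{real_inner,complete_space} set" and A :: "'a \<Rightarrow> 'b::{real_inner,complete_space}"
  assumes op: "dd_closed_op D A" and clR: "closed (ran_op D A)"
  shows "fp_const D A \<ge> 0 \<and> (\<forall>x\<in>D \<inter> ran_op (adj_dom D A) (adj D A). norm x \<le> fp_const D A * norm (A x))"
proof -
  have dense: "closure D = UNIV" using op unfolding dd_closed_op_def by auto
  define S where "S = {c. 0 < c \<and> (\<forall>x \<in> D \<inter> ran_op (adj_dom D A) (adj D A). norm x \<le> c * norm (A x))}"
  have fpS: "fp_const D A = Inf S" unfolding S_def fp_const_def ..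
  obtain c where c: "c > 0" "\<forall>x\<in>D. (\<forall>n\<in>ker_op D A. inner n x = 0) \<longrightarrow> norm x \<le> c * norm (A x)"
    using friedrichs[OF op clR] by blast
  have "c \<in> S" unfolding S_def
  proof (intro CollectI conjI ballI)
    show "0 < c" by fact
    fix x assume x: "x \<in> D \<inter> ran_op (adj_dom D A) (adj D A)"
    have "\<forall>n\<in>ker_op D A. inner n x = 0"
    proof
      fix n assume "n \<in> ker_op D A"
      hence "inner x n = 0" using ran_adj_orth_ker[OF dense] x by blast
      thus "inner n x = 0" by (simp only: inner_commute)
    qed
    thus "norm x \<le> c * norm (A x)" using c x by blast
  qed
  hence Sne: "S \<noteq> {}" by blast
  have S0: "\<And>d. d \<in> S \<Longrightarrow> 0 < d" unfolding S_def by blast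
  have nn: "0 \<le> Inf S" using Sne S0 by (intro cInf_greatest) (auto intro: less_imp_le)
  have bd: "norm x \<le> Inf S * norm (A x)" if x: "x \<in> D \<inter> ran_op (adj_dom D A) (adj D A)" for x
  proof (cases "A x = 0")
    case True
    hence "x \<in> ker_op D A" using x unfolding ker_op_def by simp
    hence "inner x x = 0" using ran_adj_orth_ker[OF dense] x by blast
    thus ?thesis using nn by simp
  next
    case False
    have pos: "norm (A x) > 0" using False by simp
    have "norm x / norm (A x) \<le> Inf S"
    proof (rule cInf_greatest[OF Sne])
      fix d assume "d \<in> S"
      hence "norm x \<le> d * norm (A x)" using x unfolding S_def by blast
      thus "norm x / norm (A x) \<le> d" using pos by (simp add: divide_le_eq)
    qed
    thus ?thesis using pos by (simp add: divide_le_eq)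
  qed
  show ?thesis using nn bd fpS by simp
qed

lemma adj_friedrichs_fp:
  fixes D :: "'a::{real_inner,complete_space} set" and A :: "'a \<Rightarrow> 'b::{real_inner,complete_space}"
  assumes op: "dd_closed_op D A" and clR: "closed (ran_op D A)"
    and q: "q \<in> adj_dom D A" "q \<in> ran_op D A"
  shows "norm q \<le> fp_const D A * norm (adj D A q)"
proof (rule adj_friedrichs_gen[OF op, of "ran_op (adj_dom D A) (adj D A)"])
  show "\<And>v. v \<in> D \<Longrightarrow> \<forall>n\<in>ker_op D A. inner n v = 0 \<Longrightarrow> v \<in> ran_op (adj_dom D A) (adj D A)"
    by (rule orth_ker_in_ran_adj[OF op clR])
  show "\<And>v. v \<in> D \<Longrightarrow> v \<in> ran_op (adj_dom D A) (adj D A) \<Longrightarrow> norm v \<le> fp_const D A * norm (A v)"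
    using fp_const_valid[OF op clR] by blast
  show "fp_const D A \<ge> 0" using fp_const_valid[OF op clR] by blast
qed (use q in auto)



theorem corollary4p4:
  fixes D0 :: "'h0::{real_inner,complete_space} set" and A0 :: "'h0 \<Rightarrow> 'h1::{real_inner,complete_space}"
    and D1 :: "'h1 set" and A1 :: "'h1 \<Rightarrow> 'h2::{real_inner,complete_space}"
    and D2 :: "'h2 set" and A2 :: "'h2 \<Rightarrow> 'h3::{real_inner,complete_space}"
    and D3 :: "'h3 set" and A3 :: "'h3 \<Rightarrow> 'h4::{real_inner,complete_space}"
    and f :: 'h3 and g :: 'h1 and k x xt xtp xf xg :: 'h2
  assumes op0: "dd_closed_op D0 A0" and op1: "dd_closed_op D1 A1"
    and op2: "dd_closed_op D2 A2" and op3: "dd_closed_op D3 A3"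
    and cx0: "ran_op D0 A0 \<subseteq> ker_op D1 A1"
    and cx1: "ran_op D1 A1 \<subseteq> ker_op D2 A2"
    and cx2: "ran_op D2 A2 \<subseteq> ker_op D3 A3"
    and closed_R1: "closed (ran_op D1 A1)" and closed_R2: "closed (ran_op D2 A2)"
  defines "D1s \<equiv> adj_dom D1 A1" and "A1s \<equiv> adj D1 A1"
    and "D2s \<equiv> adj_dom D2 A2" and "A2s \<equiv> adj D2 A2"
  defines "K2 \<equiv> ker_op D2 A2 \<inter> ker_op D1s A1s"
  assumes K2_fin: "\<exists>B. finite B \<and> K2 \<subseteq> span B"
  defines "\<pi>2 \<equiv> oproj K2"
    and "\<pi>A1 \<equiv> oproj (ran_op D1 A1)" and "\<pi>A2s \<equiv> oproj (ran_op D2s A2s)"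
  defines "\<pi>NA1s \<equiv> (\<lambda>y. y - \<pi>A1 y)" and "\<pi>NA2 \<equiv> (\<lambda>y. y - \<pi>A2s y)"
  defines "c1 \<equiv> fp_const D1 A1" and "c2 \<equiv> fp_const D2 A2"
  assumes f_in: "f \<in> ran_op D2 A2" and g_in: "g \<in> ran_op D1s A1s" and k_in: "k \<in> K2"
    and xf: "xf \<in> D2 \<inter> ran_op D2s A2s" "A2 xf = f"
    and xg: "xg \<in> D1s \<inter> ran_op D1 A1" "A1s xg = g"
    and x_sol: "x \<in> D2 \<inter> D1s" "A2 x = f" "A1s x = g" "\<pi>2 x = k"
    and xtp: "xtp \<in> orthogonal_comp K2" and xt: "xt = k + xtp"
  defines "e \<equiv> x - xt"
  defines "eA1 \<equiv> \<pi>A1 e" and "eA2s \<equiv> \<pi>A2s e"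
  shows
    "(e = xf + xg - xtp \<and> e = eA1 + eA2s
      \<and> {a + b | a b. a \<in> ran_op D1 A1 \<and> b \<in> ran_op D2s A2s} = orthogonal_comp K2
      \<and> e \<in> orthogonal_comp K2 \<and> \<pi>2 e = 0
      \<and> (norm e)\<^sup>2 = (norm eA1)\<^sup>2 + (norm eA2s)\<^sup>2)
   \<and> (eA1 = xg - \<pi>A1 xt \<and> eA1 = xg - \<pi>A1 xtp
      \<and> eA1 + xt = x - \<pi>NA1s e \<and> eA1 + xtp = x - k - \<pi>NA1s e
      \<and> eA1 + xt \<in> D1s \<and> eA1 + xtp \<in> D1s
      \<and> A1s (eA1 + xt) = g \<and> A1s (eA1 + xtp) = g
      \<and> (\<forall>\<zeta>\<in>D1s. norm eA1 \<le> c1 * norm (A1s \<zeta> - g) + norm (\<zeta> - xt))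
      \<and> c1 * norm (A1s (eA1 + xt) - g) + norm ((eA1 + xt) - xt) = norm eA1
      \<and> (\<forall>\<zeta>\<in>D1s. norm eA1 \<le> c1 * norm (A1s \<zeta> - g) + norm (\<zeta> - xtp))
      \<and> c1 * norm (A1s (eA1 + xtp) - g) + norm ((eA1 + xtp) - xtp) = norm eA1)
   \<and> (eA2s = xf - \<pi>A2s xt \<and> eA2s = xf - \<pi>A2s xtp
      \<and> eA2s + xt = x - \<pi>NA2 e \<and> eA2s + xtp = x - k - \<pi>NA2 e
      \<and> eA2s + xt \<in> D2 \<and> eA2s + xtp \<in> D2
      \<and> A2 (eA2s + xt) = f \<and> A2 (eA2s + xtp) = f
      \<and> (\<forall>\<xi>\<in>D2. norm eA2s \<le> c2 * norm (A2 \<xi> - f) + norm (\<xi> - xt))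
      \<and> c2 * norm (A2 (eA2s + xt) - f) + norm ((eA2s + xt) - xt) = norm eA2s
      \<and> (\<forall>\<xi>\<in>D2. norm eA2s \<le> c2 * norm (A2 \<xi> - f) + norm (\<xi> - xtp))
      \<and> c2 * norm (A2 (eA2s + xtp) - f) + norm ((eA2s + xtp) - xtp) = norm eA2s)"
proof -
  have lin1: "linear_on D1 A1" and dense1: "closure D1 = UNIV" using op1 unfolding dd_closed_op_def by auto
  have lin2: "linear_on D2 A2" and dense2: "closure D2 = UNIV" using op2 unfolding dd_closed_op_def by auto
  have linS1: "linear_on D1s A1s" unfolding D1s_def A1s_def by (rule adj_linear[OF dense1])
  have linS2: "linear_on D2s A2s" unfolding D2s_def A2s_def by (rule adj_linear[OF dense2])
  have subD2: "subspace D2" using lin2 unfolding linear_on_def by simp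
  have subD1s: "subspace D1s" using linS1 unfolding linear_on_def by simp
  have subR1: "subspace (ran_op D1 A1)" by (rule linear_on_ran[OF lin1])
  have subR2s: "subspace (ran_op D2s A2s)" by (rule linear_on_ran[OF linS2])
  have clR2s: "closed (ran_op D2s A2s)" unfolding D2s_def A2s_def by (rule adj_closed_range[OF op2 closed_R2])
  have R1perp: "(\<forall>a\<in>ran_op D1 A1. inner a y = 0) \<longleftrightarrow> y \<in> ker_op D1s A1s" for y
    unfolding D1s_def A1s_def by (rule ker_orth_ran[OF dense1])
  have R2sperp: "z \<in> ker_op D2 A2" if "\<forall>a\<in>ran_op D2s A2s. inner a z = 0" for z
    using orth_ran_adj_ker[OF op2] that unfolding D2s_def A2s_def by blast
  have R2sN2: "inner a b = 0" if "a \<in> ran_op D2s A2s" "b \<in> ker_op D2 A2" for a b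
    using ran_adj_orth_ker[OF dense2] that unfolding D2s_def A2s_def by blast
  have fr1: "norm q \<le> c1 * norm (A1s q)" if "q \<in> D1s" "q \<in> ran_op D1 A1" for q
    using adj_friedrichs_fp[OF op1 closed_R1] that unfolding c1_def D1s_def A1s_def by blast
  have c1pos: "c1 \<ge> 0" using fp_const_valid[OF op1 closed_R1] unfolding c1_def by blast
  have fr2: "norm z \<le> c2 * norm (A2 z)" if "z \<in> D2" "z \<in> ran_op D2s A2s" for z
    using fp_const_valid[OF op2 closed_R2] that unfolding c2_def D2s_def A2s_def by blast
  have c2pos: "c2 \<ge> 0" using fp_const_valid[OF op2 closed_R2] unfolding c2_def by blast
  have clN2: "closed (ker_op D2 A2)" by (rule ker_closed[OF op2])
  have subN2: "subspace (ker_op D2 A2)" by (rule linear_on_ker[OF lin2])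
  have subN1s: "subspace (ker_op D1s A1s)" by (rule linear_on_ker[OF linS1])
  have N1s_eq: "ker_op D1s A1s = {y. \<forall>a\<in>ran_op D1 A1. inner a y = 0}"
    using R1perp by blast
  have clN1s: "closed (ker_op D1s A1s)" unfolding N1s_eq by (rule closed_orth_set)
  have sym0: "inner b a = 0" if "inner a b = 0" for a b :: 'h2
    using that by (simp only: inner_commute)
  have R1N2: "a \<in> ker_op D2 A2" if "a \<in> ran_op D1 A1" for a using cx1 that by blast
  have R2sN1s: "b \<in> ker_op D1s A1s" if b: "b \<in> ran_op D2s A2s" for b
  proof -
    have "\<forall>a\<in>ran_op D1 A1. inner a b = 0"
    proof
      fix a assume "a \<in> ran_op D1 A1"
      hence "inner b a = 0" using R2sN2[OF b R1N2] by blast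
      thus "inner a b = 0" by (rule sym0)
    qed
    thus ?thesis using R1perp by blast
  qed
  have R1N1s: "inner a y = 0" if "a \<in> ran_op D1 A1" "y \<in> ker_op D1s A1s" for a y
    using R1perp that by blast
  have R1R2s: "inner a b = 0" if "a \<in> ran_op D1 A1" "b \<in> ran_op D2s A2s" for a b
    using R1N1s[OF that(1) R2sN1s[OF that(2)]] .
  have subK2: "subspace K2" unfolding K2_def using subN2 subN1s by (rule subspace_inter)
  have clK2: "closed K2" unfolding K2_def using clN2 clN1s by (rule closed_Int)
  have K2N2: "y \<in> ker_op D2 A2" and K2N1s: "y \<in> ker_op D1s A1s" if "y \<in> K2" for y
    using that unfolding K2_def by auto
  have ocK2: "z \<in> orthogonal_comp K2 \<longleftrightarrow> (\<forall>y\<in>K2. inner y z = 0)" for z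
    by (simp add: orthogonal_comp_def orthogonal_def)
  have pA1: "\<pi>A1 z \<in> ran_op D1 A1" "\<forall>s\<in>ran_op D1 A1. inner (z - \<pi>A1 z) s = 0" for z
    using oproj_props[OF subR1 closed_R1] unfolding \<pi>A1_def by blast+
  have pA2s: "\<pi>A2s z \<in> ran_op D2s A2s" "\<forall>s\<in>ran_op D2s A2s. inner (z - \<pi>A2s z) s = 0" for z
    using oproj_props[OF subR2s clR2s] unfolding \<pi>A2s_def by blast+
  have uA1: "\<pi>A1 z = p" if "p \<in> ran_op D1 A1" "\<forall>s\<in>ran_op D1 A1. inner (z - p) s = 0" for z p
    using oproj_unique[OF subR1 closed_R1 that] unfolding \<pi>A1_def .
  have uA2s: "\<pi>A2s z = p" if "p \<in> ran_op D2s A2s" "\<forall>s\<in>ran_op D2s A2s. inner (z - p) s = 0" for z p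
    using oproj_unique[OF subR2s clR2s that] unfolding \<pi>A2s_def .
  have dec: "z = \<pi>A1 z + \<pi>A2s z" if zK: "z \<in> orthogonal_comp K2" for z
  proof -
    define a where "a = \<pi>A1 z"
    define b where "b = \<pi>A2s z"
    define r where "r = z - a - b"
    have aR: "a \<in> ran_op D1 A1" and bR: "b \<in> ran_op D2s A2s" unfolding a_def b_def using pA1 pA2s by blast+
    have "\<forall>s\<in>ran_op D1 A1. inner s r = 0"
    proof
      fix s assume s: "s \<in> ran_op D1 A1"
      have "inner (z - a) s = 0" using pA1(2) s unfolding a_def by blast
      moreover have "inner b s = 0" using R2sN2[OF bR R1N2[OF s]] .
      ultimately have "inner r s = 0" unfolding r_def by (simp add: inner_diff_left)
      thus "inner s r = 0" by (rule sym0)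
    qed
    hence rN1s: "r \<in> ker_op D1s A1s" using R1perp by blast
    have "\<forall>s\<in>ran_op D2s A2s. inner s r = 0"
    proof
      fix s assume s: "s \<in> ran_op D2s A2s"
      have "inner (z - b) s = 0" using pA2s(2) s unfolding b_def by blast
      moreover have "inner a s = 0" using sym0[OF R2sN2[OF s R1N2[OF aR]]] .
      ultimately have "inner (z - b - a) s = 0" by (simp add: inner_diff_left)
      moreover have "z - b - a = r" unfolding r_def by simp
      ultimately show "inner s r = 0" using sym0 by metis
    qed
    hence rN2: "r \<in> ker_op D2 A2" by (rule R2sperp)
    have rK: "r \<in> K2" unfolding K2_def using rN1s rN2 by blast
    have 1: "inner r z = 0" using zK rK unfolding ocK2 by blast
    have 2: "inner r a = 0" using sym0[OF R1N1s[OF aR rN1s]] .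
    have 3: "inner r b = 0" using sym0[OF R2sN2[OF bR rN2]] .
    have "inner r r = 0" using 1 2 3 unfolding r_def by (simp add: inner_diff_right)
    hence "r = 0" by simp
    thus ?thesis unfolding r_def a_def b_def by (simp add: algebra_simps)
  qed
  have sumset: "{a + b | a b. a \<in> ran_op D1 A1 \<and> b \<in> ran_op D2s A2s} = orthogonal_comp K2"
  proof (intro set_eqI iffI)
    fix z assume "z \<in> {a + b | a b. a \<in> ran_op D1 A1 \<and> b \<in> ran_op D2s A2s}"
    then obtain a b where ab: "z = a + b" "a \<in> ran_op D1 A1" "b \<in> ran_op D2s A2s" by blast
    have "\<forall>y\<in>K2. inner y z = 0"
    proof
      fix y assume y: "y \<in> K2"
      have "inner y a = 0" using sym0[OF R1N1s[OF ab(2) K2N1s[OF y]]] .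
      moreover have "inner y b = 0" using sym0[OF R2sN2[OF ab(3) K2N2[OF y]]] .
      ultimately show "inner y z = 0" using ab(1) by (simp add: inner_add_right)
    qed
    thus "z \<in> orthogonal_comp K2" unfolding ocK2 .
  next
    fix z assume z: "z \<in> orthogonal_comp K2"
    have "z = \<pi>A1 z + \<pi>A2s z" by (rule dec[OF z])
    thus "z \<in> {a + b | a b. a \<in> ran_op D1 A1 \<and> b \<in> ran_op D2s A2s}" using pA1(1) pA2s(1) by blast
  qed
  have p2x: "\<forall>s\<in>K2. inner (x - \<pi>2 x) s = 0"
    using oproj_props[OF subK2 clK2] unfolding \<pi>2_def by blast
  have xk_perp: "x - k \<in> orthogonal_comp K2"
    unfolding ocK2 using p2x x_sol(4) sym0 by metis
  define a0 where "a0 = \<pi>A1 (x - k)"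
  define b0 where "b0 = \<pi>A2s (x - k)"
  have xkab: "x - k = a0 + b0" unfolding a0_def b0_def by (rule dec[OF xk_perp])
  have a0R: "a0 \<in> ran_op D1 A1" and b0R: "b0 \<in> ran_op D2s A2s" unfolding a0_def b0_def using pA1 pA2s by blast+
  have kD2: "k \<in> D2" "A2 k = 0" using K2N2[OF k_in] unfolding ker_op_def by auto
  have kD1s: "k \<in> D1s" "A1s k = 0" using K2N1s[OF k_in] unfolding ker_op_def by auto
  have b0xf: "b0 = xf"
  proof -
    have a0D: "a0 \<in> D2" "A2 a0 = 0" using R1N2[OF a0R] unfolding ker_op_def by auto
    have s1: "x - k \<in> D2 \<and> A2 (x - k) = A2 x - A2 k" by (rule linear_on_diff[OF lin2 _ kD2(1)]) (use x_sol in blast)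
    have s2: "(x - k) - a0 \<in> D2 \<and> A2 ((x - k) - a0) = A2 (x - k) - A2 a0" by (rule linear_on_diff[OF lin2 _ a0D(1)]) (use s1 in blast)
    have bD: "b0 \<in> D2" "A2 b0 = f" using s1 s2 xkab a0D kD2 x_sol(2) by (auto simp: algebra_simps)
    have s3: "b0 - xf \<in> D2 \<and> A2 (b0 - xf) = A2 b0 - A2 xf" by (rule linear_on_diff[OF lin2 bD(1)]) (use xf in blast)
    hence "b0 - xf \<in> ker_op D2 A2" using bD xf unfolding ker_op_def by simp
    moreover have "b0 - xf \<in> ran_op D2s A2s" using subR2s b0R xf(1) by (simp add: subspace_diff)
    ultimately have "inner (b0 - xf) (b0 - xf) = 0" using R2sN2 by blast
    thus ?thesis by simp
  qed
  have a0xg: "a0 = xg"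
  proof -
    have b0D: "b0 \<in> D1s" "A1s b0 = 0" using R2sN1s[OF b0R] unfolding ker_op_def by auto
    have s1: "x - k \<in> D1s \<and> A1s (x - k) = A1s x - A1s k" by (rule linear_on_diff[OF linS1 _ kD1s(1)]) (use x_sol in blast)
    have s2: "(x - k) - b0 \<in> D1s \<and> A1s ((x - k) - b0) = A1s (x - k) - A1s b0" by (rule linear_on_diff[OF linS1 _ b0D(1)]) (use s1 in blast)
    have aD: "a0 \<in> D1s" "A1s a0 = g" using s1 s2 xkab b0D kD1s x_sol(3) by (auto simp: algebra_simps)
    have s3: "a0 - xg \<in> D1s \<and> A1s (a0 - xg) = A1s a0 - A1s xg" by (rule linear_on_diff[OF linS1 aD(1)]) (use xg in blast)
    hence "a0 - xg \<in> ker_op D1s A1s" using aD xg unfolding ker_op_def by simp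
    moreover have "a0 - xg \<in> ran_op D1 A1" using subR1 a0R xg(1) by (simp add: subspace_diff)
    ultimately have "inner (a0 - xg) (a0 - xg) = 0" using R1N1s by blast
    thus ?thesis by simp
  qed
  have xk_eq: "x - k = xg + xf" using xkab a0xg b0xf by simp
  have e1: "e = xf + xg - xtp" unfolding e_def xt using xk_eq by (simp add: algebra_simps)
  have e_alt: "e = (x - k) - xtp" unfolding e_def xt by (simp add: algebra_simps)
  have e_perp: "e \<in> orthogonal_comp K2"
    unfolding e_alt using subspace_orthogonal_comp[of K2] xk_perp xtp by (simp add: subspace_diff)
  have e2: "e = eA1 + eA2s" unfolding eA1_def eA2s_def by (rule dec[OF e_perp])
  have eA1R: "eA1 \<in> ran_op D1 A1" unfolding eA1_def using pA1 by blast
  have eA2sR: "eA2s \<in> ran_op D2s A2s" unfolding eA2s_def using pA2s by blast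
  have pe: "\<pi>2 e = 0" unfolding \<pi>2_def
  proof (rule oproj_unique[OF subK2 clK2])
    show "0 \<in> K2" using subK2 by (simp add: subspace_0)
    show "\<forall>s\<in>K2. inner (e - 0) s = 0" using e_perp unfolding ocK2 using sym0 by auto
  qed
  have ne: "(norm e)\<^sup>2 = (norm eA1)\<^sup>2 + (norm eA2s)\<^sup>2"
  proof -
    have "orthogonal eA1 eA2s" unfolding orthogonal_def using R1R2s[OF eA1R eA2sR] .
    from norm_add_Pythagorean[OF this] show ?thesis using e2 by simp
  qed
  have part1: "e = xf + xg - xtp \<and> e = eA1 + eA2s
      \<and> {a + b | a b. a \<in> ran_op D1 A1 \<and> b \<in> ran_op D2s A2s} = orthogonal_comp K2
      \<and> e \<in> orthogonal_comp K2 \<and> \<pi>2 e = 0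
      \<and> (norm e)\<^sup>2 = (norm eA1)\<^sup>2 + (norm eA2s)\<^sup>2"
    using e1 e2 sumset e_perp pe ne by blast
  have kR1: "inner k s = 0" if "s \<in> ran_op D1 A1" for s using sym0[OF R1N1s[OF that K2N1s[OF k_in]]] .
  have xfR1: "inner xf s = 0" if "s \<in> ran_op D1 A1" for s using R2sN2[OF _ R1N2[OF that]] xf(1) by blast
  have a1: "eA1 = xg - \<pi>A1 xt" unfolding eA1_def
  proof (rule uA1)
    show "xg - \<pi>A1 xt \<in> ran_op D1 A1" using subR1 xg(1) pA1(1) by (simp add: subspace_diff)
    show "\<forall>s\<in>ran_op D1 A1. inner (e - (xg - \<pi>A1 xt)) s = 0"
    proof
      fix s assume s: "s \<in> ran_op D1 A1"
      have eq: "e - (xg - \<pi>A1 xt) = xf + k - (xt - \<pi>A1 xt)" unfolding e1 xt by (simp add: algebra_simps)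
      have z: "inner (xt - \<pi>A1 xt) s = 0" using pA1(2) s by blast
      have "inner (e - (xg - \<pi>A1 xt)) s = inner (xf + k - (xt - \<pi>A1 xt)) s" by (simp only: eq)
      also have "\<dots> = inner xf s + inner k s - inner (xt - \<pi>A1 xt) s" by (simp only: inner_add_left inner_diff_left)
      finally show "inner (e - (xg - \<pi>A1 xt)) s = 0" using xfR1[OF s] kR1[OF s] z by simp
    qed
  qed
  have a2: "eA1 = xg - \<pi>A1 xtp" unfolding eA1_def
  proof (rule uA1)
    show "xg - \<pi>A1 xtp \<in> ran_op D1 A1" using subR1 xg(1) pA1(1) by (simp add: subspace_diff)
    show "\<forall>s\<in>ran_op D1 A1. inner (e - (xg - \<pi>A1 xtp)) s = 0"
    proof
      fix s assume s: "s \<in> ran_op D1 A1"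
      have eq: "e - (xg - \<pi>A1 xtp) = xf - (xtp - \<pi>A1 xtp)" unfolding e1 by (simp add: algebra_simps)
      have z: "inner (xtp - \<pi>A1 xtp) s = 0" using pA1(2) s by blast
      have "inner (e - (xg - \<pi>A1 xtp)) s = inner (xf - (xtp - \<pi>A1 xtp)) s" by (simp only: eq)
      also have "\<dots> = inner xf s - inner (xtp - \<pi>A1 xtp) s" by (simp only: inner_diff_left)
      finally show "inner (e - (xg - \<pi>A1 xtp)) s = 0" using xfR1[OF s] z by simp
    qed
  qed
  have a3: "eA1 + xt = x - \<pi>NA1s e" unfolding \<pi>NA1s_def eA1_def e_def by (simp add: algebra_simps)
  have a4: "eA1 + xtp = x - k - \<pi>NA1s e" unfolding \<pi>NA1s_def eA1_def e_def xt by (simp add: algebra_simps)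
  have eA2sN1s: "eA2s \<in> D1s" "A1s eA2s = 0" using R2sN1s[OF eA2sR] unfolding ker_op_def by auto
  have a5: "eA1 + xt = x - eA2s" using e2 unfolding e_def by (simp add: algebra_simps)
  have a6: "eA1 + xtp = (x - k) - eA2s" using e2 unfolding e_def xt by (simp add: algebra_simps)
  have xkD1s: "x - k \<in> D1s \<and> A1s (x - k) = A1s x - A1s k" by (rule linear_on_diff[OF linS1 _ kD1s(1)]) (use x_sol in blast)
  have d1: "x - eA2s \<in> D1s \<and> A1s (x - eA2s) = A1s x - A1s eA2s" by (rule linear_on_diff[OF linS1 _ eA2sN1s(1)]) (use x_sol in blast)
  have d2: "(x - k) - eA2s \<in> D1s \<and> A1s ((x - k) - eA2s) = A1s (x - k) - A1s eA2s" by (rule linear_on_diff[OF linS1 _ eA2sN1s(1)]) (use xkD1s in blast)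
  have a7: "eA1 + xt \<in> D1s" "A1s (eA1 + xt) = g" using a5 d1 eA2sN1s x_sol(3) by auto
  have a8: "eA1 + xtp \<in> D1s" "A1s (eA1 + xtp) = g" using a6 d2 xkD1s eA2sN1s kD1s x_sol(3) by auto
  have ineq1: "norm eA1 \<le> c1 * norm (A1s \<zeta> - g) + norm (\<zeta> - t)"
    if w: "w \<in> D1s" "A1s w = g" and et: "e = w - t" and z: "\<zeta> \<in> D1s" for w t \<zeta>
  proof -
    have u: "w - \<zeta> \<in> D1s \<and> A1s (w - \<zeta>) = A1s w - A1s \<zeta>" by (rule linear_on_diff[OF linS1 w(1) z])
    define p where "p = \<pi>A1 (w - \<zeta>)"
    define q where "q = \<pi>A1 (\<zeta> - t)"
    have pR: "p \<in> ran_op D1 A1" and qR: "q \<in> ran_op D1 A1" unfolding p_def q_def using pA1 by blast+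
    have "\<forall>a\<in>ran_op D1 A1. inner a ((w - \<zeta>) - p) = 0"
    proof
      fix a assume "a \<in> ran_op D1 A1"
      hence "inner ((w - \<zeta>) - p) a = 0" using pA1(2) unfolding p_def by blast
      thus "inner a ((w - \<zeta>) - p) = 0" by (rule sym0)
    qed
    hence kp: "(w - \<zeta>) - p \<in> ker_op D1s A1s" using R1perp by blast
    hence kpD: "(w - \<zeta>) - p \<in> D1s" "A1s ((w - \<zeta>) - p) = 0" unfolding ker_op_def by auto
    have pd: "(w - \<zeta>) - ((w - \<zeta>) - p) \<in> D1s \<and> A1s ((w - \<zeta>) - ((w - \<zeta>) - p)) = A1s (w - \<zeta>) - A1s ((w - \<zeta>) - p)"
      by (rule linear_on_diff[OF linS1 _ kpD(1)]) (use u in blast)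
    hence pD: "p \<in> D1s" "A1s p = g - A1s \<zeta>" using kpD u w(2) by auto
    have "eA1 = p + q" unfolding eA1_def
    proof (rule uA1)
      show "p + q \<in> ran_op D1 A1" using subR1 pR qR by (simp add: subspace_add)
      show "\<forall>s\<in>ran_op D1 A1. inner (e - (p + q)) s = 0"
      proof
        fix s assume s: "s \<in> ran_op D1 A1"
        have eq: "e - (p + q) = ((w - \<zeta>) - p) + ((\<zeta> - t) - q)" unfolding et by (simp add: algebra_simps)
        have z1: "inner ((w - \<zeta>) - p) s = 0" using pA1(2) s unfolding p_def by blast
        have z2: "inner ((\<zeta> - t) - q) s = 0" using pA1(2) s unfolding q_def by blast
        have "inner (e - (p + q)) s = inner (((w - \<zeta>) - p) + ((\<zeta> - t) - q)) s" by (simp only: eq)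
        also have "\<dots> = inner ((w - \<zeta>) - p) s + inner ((\<zeta> - t) - q) s" by (simp only: inner_add_left)
        finally show "inner (e - (p + q)) s = 0" using z1 z2 by simp
      qed
    qed
    hence "norm eA1 \<le> norm p + norm q" by (simp add: norm_triangle_ineq)
    also have "norm p \<le> c1 * norm (A1s p)" by (rule fr1[OF pD(1) pR])
    also have "norm (A1s p) = norm (A1s \<zeta> - g)" using pD(2) by (simp add: norm_minus_commute)
    also have "norm q \<le> norm (\<zeta> - t)" unfolding q_def \<pi>A1_def by (rule oproj_norm[OF subR1 closed_R1])
    finally show ?thesis by simp
  qed
  have part2: "eA1 = xg - \<pi>A1 xt \<and> eA1 = xg - \<pi>A1 xtp
      \<and> eA1 + xt = x - \<pi>NA1s e \<and> eA1 + xtp = x - k - \<pi>NA1s e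
      \<and> eA1 + xt \<in> D1s \<and> eA1 + xtp \<in> D1s
      \<and> A1s (eA1 + xt) = g \<and> A1s (eA1 + xtp) = g
      \<and> (\<forall>\<zeta>\<in>D1s. norm eA1 \<le> c1 * norm (A1s \<zeta> - g) + norm (\<zeta> - xt))
      \<and> c1 * norm (A1s (eA1 + xt) - g) + norm ((eA1 + xt) - xt) = norm eA1
      \<and> (\<forall>\<zeta>\<in>D1s. norm eA1 \<le> c1 * norm (A1s \<zeta> - g) + norm (\<zeta> - xtp))
      \<and> c1 * norm (A1s (eA1 + xtp) - g) + norm ((eA1 + xtp) - xtp) = norm eA1"
  proof (intro conjI ballI)
    fix \<zeta> assume z: "\<zeta> \<in> D1s"
    show "norm eA1 \<le> c1 * norm (A1s \<zeta> - g) + norm (\<zeta> - xt)"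
      by (rule ineq1[OF _ x_sol(3) e_def[THEN meta_eq_to_obj_eq] z]) (use x_sol in blast)
    show "norm eA1 \<le> c1 * norm (A1s \<zeta> - g) + norm (\<zeta> - xtp)"
      by (rule ineq1[OF _ _ e_alt z]) (use xkD1s kD1s x_sol in auto)
  next
    show "c1 * norm (A1s (eA1 + xt) - g) + norm ((eA1 + xt) - xt) = norm eA1" using a7(2) by simp
  next
    show "c1 * norm (A1s (eA1 + xtp) - g) + norm ((eA1 + xtp) - xtp) = norm eA1" using a8(2) by simp
  qed (fact a1 a2 a3 a4 a7 a8)+
  have kR2s: "inner k s = 0" if "s \<in> ran_op D2s A2s" for s using sym0[OF R2sN2[OF that K2N2[OF k_in]]] .
  have xgR2s: "inner xg s = 0" if "s \<in> ran_op D2s A2s" for s using sym0[OF R2sN2[OF that R1N2]] xg(1) by blast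
  have b1: "eA2s = xf - \<pi>A2s xt" unfolding eA2s_def
  proof (rule uA2s)
    show "xf - \<pi>A2s xt \<in> ran_op D2s A2s" using subR2s xf(1) pA2s(1) by (simp add: subspace_diff)
    show "\<forall>s\<in>ran_op D2s A2s. inner (e - (xf - \<pi>A2s xt)) s = 0"
    proof
      fix s assume s: "s \<in> ran_op D2s A2s"
      have eq: "e - (xf - \<pi>A2s xt) = xg + k - (xt - \<pi>A2s xt)" unfolding e1 xt by (simp add: algebra_simps)
      have z: "inner (xt - \<pi>A2s xt) s = 0" using pA2s(2) s by blast
      have "inner (e - (xf - \<pi>A2s xt)) s = inner (xg + k - (xt - \<pi>A2s xt)) s" by (simp only: eq)
      also have "\<dots> = inner xg s + inner k s - inner (xt - \<pi>A2s xt) s" by (simp only: inner_add_left inner_diff_left)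
      finally show "inner (e - (xf - \<pi>A2s xt)) s = 0" using xgR2s[OF s] kR2s[OF s] z by simp
    qed
  qed
  have b2: "eA2s = xf - \<pi>A2s xtp" unfolding eA2s_def
  proof (rule uA2s)
    show "xf - \<pi>A2s xtp \<in> ran_op D2s A2s" using subR2s xf(1) pA2s(1) by (simp add: subspace_diff)
    show "\<forall>s\<in>ran_op D2s A2s. inner (e - (xf - \<pi>A2s xtp)) s = 0"
    proof
      fix s assume s: "s \<in> ran_op D2s A2s"
      have eq: "e - (xf - \<pi>A2s xtp) = xg - (xtp - \<pi>A2s xtp)" unfolding e1 by (simp add: algebra_simps)
      have z: "inner (xtp - \<pi>A2s xtp) s = 0" using pA2s(2) s by blast
      have "inner (e - (xf - \<pi>A2s xtp)) s = inner (xg - (xtp - \<pi>A2s xtp)) s" by (simp only: eq)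
      also have "\<dots> = inner xg s - inner (xtp - \<pi>A2s xtp) s" by (simp only: inner_diff_left)
      finally show "inner (e - (xf - \<pi>A2s xtp)) s = 0" using xgR2s[OF s] z by simp
    qed
  qed
  have b3: "eA2s + xt = x - \<pi>NA2 e" unfolding \<pi>NA2_def eA2s_def e_def by (simp add: algebra_simps)
  have b4: "eA2s + xtp = x - k - \<pi>NA2 e" unfolding \<pi>NA2_def eA2s_def e_def xt by (simp add: algebra_simps)
  have eA1N2: "eA1 \<in> D2" "A2 eA1 = 0" using R1N2[OF eA1R] unfolding ker_op_def by auto
  have b5: "eA2s + xt = x - eA1" using e2 unfolding e_def by (simp add: algebra_simps)
  have b6: "eA2s + xtp = (x - k) - eA1" using e2 unfolding e_def xt by (simp add: algebra_simps)
  have xkD2: "x - k \<in> D2 \<and> A2 (x - k) = A2 x - A2 k" by (rule linear_on_diff[OF lin2 _ kD2(1)]) (use x_sol in blast)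
  have d3: "x - eA1 \<in> D2 \<and> A2 (x - eA1) = A2 x - A2 eA1" by (rule linear_on_diff[OF lin2 _ eA1N2(1)]) (use x_sol in blast)
  have d4: "(x - k) - eA1 \<in> D2 \<and> A2 ((x - k) - eA1) = A2 (x - k) - A2 eA1" by (rule linear_on_diff[OF lin2 _ eA1N2(1)]) (use xkD2 in blast)
  have b7: "eA2s + xt \<in> D2" "A2 (eA2s + xt) = f" using b5 d3 eA1N2 x_sol(2) by auto
  have b8: "eA2s + xtp \<in> D2" "A2 (eA2s + xtp) = f" using b6 d4 xkD2 eA1N2 kD2 x_sol(2) by auto
  have ineq2: "norm eA2s \<le> c2 * norm (A2 \<xi> - f) + norm (\<xi> - t)"
    if w: "w \<in> D2" "A2 w = f" and et: "e = w - t" and z: "\<xi> \<in> D2" for w t \<xi>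
  proof -
    have u: "w - \<xi> \<in> D2 \<and> A2 (w - \<xi>) = A2 w - A2 \<xi>" by (rule linear_on_diff[OF lin2 w(1) z])
    define p where "p = \<pi>A2s (w - \<xi>)"
    define q where "q = \<pi>A2s (\<xi> - t)"
    have pR: "p \<in> ran_op D2s A2s" and qR: "q \<in> ran_op D2s A2s" unfolding p_def q_def using pA2s by blast+
    have "\<forall>a\<in>ran_op D2s A2s. inner a ((w - \<xi>) - p) = 0"
    proof
      fix a assume "a \<in> ran_op D2s A2s"
      hence "inner ((w - \<xi>) - p) a = 0" using pA2s(2) unfolding p_def by blast
      thus "inner a ((w - \<xi>) - p) = 0" by (rule sym0)
    qed
    hence kp: "(w - \<xi>) - p \<in> ker_op D2 A2" by (rule R2sperp)
    hence kpD: "(w - \<xi>) - p \<in> D2" "A2 ((w - \<xi>) - p) = 0" unfolding ker_op_def by auto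
    have pd: "(w - \<xi>) - ((w - \<xi>) - p) \<in> D2 \<and> A2 ((w - \<xi>) - ((w - \<xi>) - p)) = A2 (w - \<xi>) - A2 ((w - \<xi>) - p)"
      by (rule linear_on_diff[OF lin2 _ kpD(1)]) (use u in blast)
    hence pD: "p \<in> D2" "A2 p = f - A2 \<xi>" using kpD u w(2) by auto
    have "eA2s = p + q" unfolding eA2s_def
    proof (rule uA2s)
      show "p + q \<in> ran_op D2s A2s" using subR2s pR qR by (simp add: subspace_add)
      show "\<forall>s\<in>ran_op D2s A2s. inner (e - (p + q)) s = 0"
      proof
        fix s assume s: "s \<in> ran_op D2s A2s"
        have eq: "e - (p + q) = ((w - \<xi>) - p) + ((\<xi> - t) - q)" unfolding et by (simp add: algebra_simps)
        have z1: "inner ((w - \<xi>) - p) s = 0" using pA2s(2) s unfolding p_def by blast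
        have z2: "inner ((\<xi> - t) - q) s = 0" using pA2s(2) s unfolding q_def by blast
        have "inner (e - (p + q)) s = inner (((w - \<xi>) - p) + ((\<xi> - t) - q)) s" by (simp only: eq)
        also have "\<dots> = inner ((w - \<xi>) - p) s + inner ((\<xi> - t) - q) s" by (simp only: inner_add_left)
        finally show "inner (e - (p + q)) s = 0" using z1 z2 by simp
      qed
    qed
    hence "norm eA2s \<le> norm p + norm q" by (simp add: norm_triangle_ineq)
    also have "norm p \<le> c2 * norm (A2 p)" by (rule fr2[OF pD(1) pR])
    also have "norm (A2 p) = norm (A2 \<xi> - f)" using pD(2) by (simp add: norm_minus_commute)
    also have "norm q \<le> norm (\<xi> - t)" unfolding q_def \<pi>A2s_def by (rule oproj_norm[OF subR2s clR2s])
    finally show ?thesis by simp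
  qed
  have part3: "eA2s = xf - \<pi>A2s xt \<and> eA2s = xf - \<pi>A2s xtp
      \<and> eA2s + xt = x - \<pi>NA2 e \<and> eA2s + xtp = x - k - \<pi>NA2 e
      \<and> eA2s + xt \<in> D2 \<and> eA2s + xtp \<in> D2
      \<and> A2 (eA2s + xt) = f \<and> A2 (eA2s + xtp) = f
      \<and> (\<forall>\<xi>\<in>D2. norm eA2s \<le> c2 * norm (A2 \<xi> - f) + norm (\<xi> - xt))
      \<and> c2 * norm (A2 (eA2s + xt) - f) + norm ((eA2s + xt) - xt) = norm eA2s
      \<and> (\<forall>\<xi>\<in>D2. norm eA2s \<le> c2 * norm (A2 \<xi> - f) + norm (\<xi> - xtp))
      \<and> c2 * norm (A2 (eA2s + xtp) - f) + norm ((eA2s + xtp) - xtp) = norm eA2s"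
  proof (intro conjI ballI)
    fix \<xi> assume z: "\<xi> \<in> D2"
    show "norm eA2s \<le> c2 * norm (A2 \<xi> - f) + norm (\<xi> - xt)"
      by (rule ineq2[OF _ x_sol(2) e_def[THEN meta_eq_to_obj_eq] z]) (use x_sol in blast)
    show "norm eA2s \<le> c2 * norm (A2 \<xi> - f) + norm (\<xi> - xtp)"
      by (rule ineq2[OF _ _ e_alt z]) (use xkD2 kD2 x_sol in auto)
  next
    show "c2 * norm (A2 (eA2s + xt) - f) + norm ((eA2s + xt) - xt) = norm eA2s" using b7(2) by simp
  next
    show "c2 * norm (A2 (eA2s + xtp) - f) + norm ((eA2s + xtp) - xtp) = norm eA2s" using b8(2) by simp
  qed (fact b1 b2 b3 b4 b7 b8)+
  show ?thesis by (rule conjI[OF part1 conjI[OF part2 part3]])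
qed



end
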